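(* Let $f:\mathbb{R}^{m\times n}\to\mathbb{R}$ be smooth and strongly convex, let $(U_*,V_* )$ be a critical point of $F$ with $U_*,V_*$ of full column rank $k$, and let $\omega\neq0$. Then the block-diagonal part $D$ of the Hessian $H$ of $F$ at $(U_*,V_* )$ is positive definite, $S_\omega$ is smooth near $(U_*,V_* )$, and \[ S_\omega'(U_*,V_* )=T_\omega:=I-N_\omega^{-1}H,\qquad N_\omega=\tfrac1\omega D+E. \] Equivalently, $S_\omega'(U_*,V_* )=(I-\omega L)^{-1}[(1-\omega)I+\omega R]$ with $L=-D^{-1}E$, $R=-D^{-1}E^\top$, where $L=\begin{pmatrix}0&0\\ \hat S_2'(U_* )&0\end{pmatrix}$, $R=\begin{pmatrix}0&\hat S_1'(V_* )\\0&0\end{pmatrix}$.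
   Context: $F(U,V)=f(UV^\top)$ on $\mathbb{R}^{m\times k}\times\mathbb{R}^{n\times k}$ (Frobenius inner product). $\hat S_1(V)=\operatorname{argmin}_U F(U,V)$, $\hat S_2(U)=\operatorname{argmin}_V F(U,V)$ (for full column rank arguments), and $S_\omega(U,V)=(1-\omega)(U,V)+\omega(\hat S_1(V),\hat S_2((1-\omega)U+\omega\hat S_1(V)))$. The Hessian $H=\nabla^2F(U_*,V_* )$ is viewed as a self-adjoint linear operator on $\mathbb{R}^{m\times k}\times\mathbb{R}^{n\times k}$ in $2\times2$ block form $H=\begin{pmatrix}\nabla_{UU}F&\nabla_{UV}F\\ \nabla_{VU}F&\nabla_{VV}F\end{pmatrix}$ and decomposed as $H=D+E+E^\top$ with $D=\mathrm{diag}(\nabla_{UU}F,\nabla_{VV}F)$ and $E=\begin{pmatrix}0&0\\ \nabla_{VU}F&0\end{pmatrix}$, all evaluated at $(U_*,V_* )$. *)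

theory Defs
  imports "HOL-Analysis.Analysis"
begin

text \<open>C-infinity smoothness on an open set S: there is a family Df of iterated
 directional derivatives (Df [] = f, Df (v#vs) x = derivative of Df vs at x applied to v),
 each of which is Frechet differentiable and continuous on S.\<close>
definition smooth_on :: "'a::euclidean_space set \<Rightarrow> ('a \<Rightarrow> 'b::real_normed_vector) \<Rightarrow> bool" where
  "smooth_on S f \<longleftrightarrow> open S \<and> (\<exists>Df :: 'a list \<Rightarrow> 'a \<Rightarrow> 'b.
      (\<forall>x\<in>S. Df [] x = f x) \<and>
      (\<forall>vs. continuous_on S (Df vs)) \<and>
      (\<forall>vs. \<forall>x\<in>S. (Df vs has_derivative (\<lambda>v. Df (v # vs) x)) (at x)))"

definition strongly_convex :: "('a::real_inner \<Rightarrow> real) \<Rightarrow> bool" where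
  "strongly_convex f \<longleftrightarrow> (\<exists>\<mu>>0. \<forall>x y. \<forall>t::real. 0 \<le> t \<and> t \<le> 1 \<longrightarrow>
      f (t *\<^sub>R x + (1 - t) *\<^sub>R y) \<le> t * f x + (1 - t) * f y - \<mu> / 2 * t * (1 - t) * (norm (x - y))\<^sup>2)"

definition grad :: "('a::euclidean_space \<Rightarrow> real) \<Rightarrow> 'a \<Rightarrow> 'a" where
  "grad F p = (THE g. (F has_derivative (\<lambda>h. g \<bullet> h)) (at p))"

definition hess :: "('a::euclidean_space \<Rightarrow> real) \<Rightarrow> 'a \<Rightarrow> 'a \<Rightarrow> 'a" where
  "hess F p = frechet_derivative (grad F) (at p)"

definition factF :: "(real^'n^'m \<Rightarrow> real) \<Rightarrow> ((real^'k^'m) \<times> (real^'k^'n)) \<Rightarrow> real" where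
  "factF f UV = f (fst UV ** transpose (snd UV))"

definition S1hat :: "(real^'n^'m \<Rightarrow> real) \<Rightarrow> real^'k^'n \<Rightarrow> real^'k^'m" where
  "S1hat f V = (THE U. \<forall>U'. factF f (U, V) \<le> factF f (U', V))"

definition S2hat :: "(real^'n^'m \<Rightarrow> real) \<Rightarrow> real^'k^'m \<Rightarrow> real^'k^'n" where
  "S2hat f U = (THE V. \<forall>V'. factF f (U, V) \<le> factF f (U, V'))"

definition Somega :: "(real^'n^'m \<Rightarrow> real) \<Rightarrow> real \<Rightarrow> ((real^'k^'m) \<times> (real^'k^'n)) \<Rightarrow> ((real^'k^'m) \<times> (real^'k^'n))" where
  "Somega f \<omega> UV = (let U = fst UV; V = snd UV; U' = (1 - \<omega>) *\<^sub>R U + \<omega> *\<^sub>R S1hat f V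
      in (U', (1 - \<omega>) *\<^sub>R V + \<omega> *\<^sub>R S2hat f U'))"

text \<open>Block parts of a linear operator H on a product space:
  D = diag(H_UU, H_VV), E = [[0,0],[H_VU,0]], E^T = [[0,H_UV],[0,0]].\<close>
definition blockD :: "('a::real_vector \<times> 'b::real_vector \<Rightarrow> 'a \<times> 'b) \<Rightarrow> 'a \<times> 'b \<Rightarrow> 'a \<times> 'b" where
  "blockD H x = (fst (H (fst x, 0)), snd (H (0, snd x)))"

definition blockE :: "('a::real_vector \<times> 'b::real_vector \<Rightarrow> 'a \<times> 'b) \<Rightarrow> 'a \<times> 'b \<Rightarrow> 'a \<times> 'b" where
  "blockE H x = (0, snd (H (fst x, 0)))"

definition blockEt :: "('a::real_vector \<times> 'b::real_vector \<Rightarrow> 'a \<times> 'b) \<Rightarrow> 'a \<times> 'b \<Rightarrow> 'a \<times> 'b" where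
  "blockEt H x = (fst (H (0, snd x)), 0)"

end

theory Submission
  imports Defs
begin


lemma smooth_on_coinduct:
  fixes S :: "'a::euclidean_space set" and P :: "('a \<Rightarrow> 'b::real_normed_vector) \<Rightarrow> bool"
  assumes S: "open S" and Pf: "P f"
    and step: "\<And>g. P g \<Longrightarrow> \<exists>g'. (\<forall>x\<in>S. (g has_derivative g' x) (at x)) \<and> (\<forall>v. P (\<lambda>x. g' x v))"
  shows "smooth_on S f"
proof -
  define d where "d g = (SOME g'. (\<forall>x\<in>S. (g has_derivative g' x) (at x)) \<and> (\<forall>v. P (\<lambda>x. g' x v)))" for g
  have d: "(\<forall>x\<in>S. (g has_derivative d g x) (at x)) \<and> (\<forall>v. P (\<lambda>x. d g x v))" if "P g" for g
    using someI_ex[OF step[OF that]] unfolding d_def by blast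
  define Df where "Df = rec_list f (\<lambda>v vs r. (\<lambda>x. d r x v))"
  have Df_simps: "Df [] = f" "Df (v#vs) = (\<lambda>x. d (Df vs) x v)" for v vs by (simp_all add: Df_def)
  have P: "P (Df vs)" for vs by (induction vs) (auto simp: Df_simps d Pf)
  have der: "(Df vs has_derivative (\<lambda>v. Df (v # vs) x)) (at x)" if "x \<in> S" for vs x
    using d[OF P[of vs]] that by (simp add: Df_simps)
  show ?thesis unfolding smooth_on_def
  proof (intro conjI exI[of _ Df] ballI allI)
    show "open S" by fact
    show "Df [] x = f x" for x by (simp add: Df_simps)
    show "continuous_on S (Df vs)" for vs
      by (metis continuous_at_imp_continuous_on der has_derivative_continuous)
    show "(Df vs has_derivative (\<lambda>v. Df (v # vs) x)) (at x)" if "x \<in> S" for vs x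
      using der that .
  qed
qed

lemma smooth_on_cong:
  assumes "smooth_on S f" "\<And>x. x \<in> S \<Longrightarrow> g x = f x"
  shows "smooth_on S g"
  using assms unfolding smooth_on_def by metis

lemma smooth_on_open: "smooth_on S f \<Longrightarrow> open S"
  unfolding smooth_on_def by blast

lemma smooth_on_has_derivative:
  assumes "smooth_on S f"
  obtains f' where "\<And>x. x \<in> S \<Longrightarrow> (f has_derivative f' x) (at x)" "\<And>v. smooth_on S (\<lambda>x. f' x v)"
proof -
  obtain Df where S: "open S" and D0: "\<forall>x\<in>S. Df [] x = f x"
    and cont: "\<forall>vs. continuous_on S (Df vs)"
    and der: "\<forall>vs. \<forall>x\<in>S. (Df vs has_derivative (\<lambda>v. Df (v # vs) x)) (at x)"
    using assms unfolding smooth_on_def by blast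
  show ?thesis
  proof
    show "(f has_derivative (\<lambda>v. Df [v] x)) (at x)" if "x \<in> S" for x
      using der[rule_format, of x "[]"] D0 S that
      by (auto intro: has_derivative_transform_within_open)
    show "smooth_on S (\<lambda>x. Df [v] x)" for v
      unfolding smooth_on_def
      using S cont der
      by (intro conjI exI[of _ "\<lambda>vs. Df (vs @ [v])"]) auto
  qed
qed

lemma smooth_on_deriv:
  assumes "smooth_on S f" "\<And>x. x \<in> S \<Longrightarrow> (f has_derivative f' x) (at x)"
  shows "smooth_on S (\<lambda>x. f' x v)"
proof -
  obtain g where g: "\<And>x. x \<in> S \<Longrightarrow> (f has_derivative g x) (at x)" "\<And>v. smooth_on S (\<lambda>x. g x v)"
    using smooth_on_has_derivative[OF assms(1)] by blast
  show ?thesis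
    by (rule smooth_on_cong[OF g(2)[of v]])
       (metis assms(2) g(1) has_derivative_unique)
qed

lemma smooth_on_differentiable:
  "smooth_on S f \<Longrightarrow> x \<in> S \<Longrightarrow> f differentiable (at x)"
  by (metis differentiable_def smooth_on_has_derivative)

lemma smooth_on_continuous_on:
  "smooth_on S f \<Longrightarrow> continuous_on S f"
  by (meson continuous_at_imp_continuous_on differentiable_imp_continuous_within smooth_on_differentiable)

lemma smooth_on_subset:
  assumes "smooth_on S f" "open T" "T \<subseteq> S"
  shows "smooth_on T f"
  using assms unfolding smooth_on_def by (meson subsetD continuous_on_subset)

lemma smooth_on_affine:
  fixes S :: "'a::euclidean_space set" and L :: "'a \<Rightarrow> 'b::real_normed_vector"
  assumes "open S" "linear L"
  shows "smooth_on S (\<lambda>x. L x + c)"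
proof (rule smooth_on_coinduct[where P="\<lambda>g. \<exists>L c. linear L \<and> g = (\<lambda>x. L x + c)"])
  fix g :: "'a \<Rightarrow> 'b" assume "\<exists>L c. linear L \<and> g = (\<lambda>x. L x + c)"
  then obtain L c where L: "linear L" and g: "g = (\<lambda>x. L x + c)" by blast
  show "\<exists>g'. (\<forall>x\<in>S. (g has_derivative g' x) (at x)) \<and> (\<forall>v. \<exists>L c. linear L \<and> (\<lambda>x. g' x v) = (\<lambda>x. L x + c))"
    apply (rule exI[of _ "\<lambda>x. L"])
    using L unfolding g
    by (auto intro!: derivative_eq_intros linear_imp_has_derivative exI[of _ "\<lambda>x. 0"] simp: linear_0 linear_zero)
qed (use assms in auto)

lemma smooth_on_const: "open S \<Longrightarrow> smooth_on S (\<lambda>x. c)"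
  using smooth_on_affine[of S "\<lambda>x. 0" c] by (simp add: linear_zero)

lemma smooth_on_linear: "open S \<Longrightarrow> linear L \<Longrightarrow> smooth_on S L"
  using smooth_on_affine[of S L 0] by simp


definition sderiv :: "'a::euclidean_space set \<Rightarrow> ('a \<Rightarrow> 'b::real_normed_vector) \<Rightarrow> 'a \<Rightarrow> 'a \<Rightarrow> 'b" where
  "sderiv S g = (SOME g'. (\<forall>x\<in>S. (g has_derivative g' x) (at x)) \<and> (\<forall>v. smooth_on S (\<lambda>x. g' x v)))"

lemma sderiv:
  assumes "smooth_on S g"
  shows "\<And>x. x \<in> S \<Longrightarrow> (g has_derivative sderiv S g x) (at x)" "\<And>v. smooth_on S (\<lambda>x. sderiv S g x v)"
proof -
  have "\<exists>g'. (\<forall>x\<in>S. (g has_derivative g' x) (at x)) \<and> (\<forall>v. smooth_on S (\<lambda>x. g' x v))"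
    using smooth_on_has_derivative[OF assms] by metis
  from someI_ex[OF this] show "\<And>x. x \<in> S \<Longrightarrow> (g has_derivative sderiv S g x) (at x)" "\<And>v. smooth_on S (\<lambda>x. sderiv S g x v)"
    unfolding sderiv_def by blast+
qed

lemma sderiv_unique:
  assumes "smooth_on S g" "x \<in> S" "(g has_derivative g') (at x)"
  shows "sderiv S g x = g'"
  using sderiv(1)[OF assms(1,2)] assms(3) has_derivative_unique by blast

lemma has_derivative_scaleR_list:
  fixes xs :: "(('a::euclidean_space \<Rightarrow> real) \<times> ('a \<Rightarrow> 'b::real_normed_vector)) list"
  assumes "\<forall>(a,b)\<in>set xs. smooth_on S a \<and> smooth_on S b" "x \<in> S"
  shows "((\<lambda>x. \<Sum>(a,b)\<leftarrow>xs. a x *\<^sub>R b x) has_derivative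
          (\<lambda>v. \<Sum>(a,b)\<leftarrow>xs. a x *\<^sub>R sderiv S b x v + sderiv S a x v *\<^sub>R b x)) (at x)"
  using assms(1)
proof (induction xs)
  case Nil
  then show ?case by (simp add: has_derivative_const)
next
  case (Cons p xs)
  obtain a b where p: "p = (a,b)" by fastforce
  have sa: "smooth_on S a" and sb: "smooth_on S b" using Cons.prems p by auto
  have a: "(a has_derivative sderiv S a x) (at x)" using sderiv(1)[OF sa assms(2)] .
  have b: "(b has_derivative sderiv S b x) (at x)" using sderiv(1)[OF sb assms(2)] .
  have IH: "((\<lambda>x. \<Sum>(a,b)\<leftarrow>xs. a x *\<^sub>R b x) has_derivative
          (\<lambda>v. \<Sum>(a,b)\<leftarrow>xs. a x *\<^sub>R sderiv S b x v + sderiv S a x v *\<^sub>R b x)) (at x)"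
    using Cons by auto
  have "((\<lambda>x. a x *\<^sub>R b x + (\<Sum>(a,b)\<leftarrow>xs. a x *\<^sub>R b x)) has_derivative
     (\<lambda>v. (a x *\<^sub>R sderiv S b x v + sderiv S a x v *\<^sub>R b x) + (\<Sum>(a,b)\<leftarrow>xs. a x *\<^sub>R sderiv S b x v + sderiv S a x v *\<^sub>R b x))) (at x)"
    by (rule has_derivative_add[OF has_derivative_scaleR[OF a b] IH])
  then show ?case unfolding p by simp
qed
lemma smooth_on_scaleR_list:
  fixes xs :: "(('a::euclidean_space \<Rightarrow> real) \<times> ('a \<Rightarrow> 'b::real_normed_vector)) list"
  assumes "open S" "\<forall>(a,b)\<in>set xs. smooth_on S a \<and> smooth_on S b"
  shows "smooth_on S (\<lambda>x. \<Sum>(a,b)\<leftarrow>xs. a x *\<^sub>R b x)"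
proof (rule smooth_on_coinduct[where P="\<lambda>u. \<exists>xs::(('a \<Rightarrow> real) \<times> ('a \<Rightarrow> 'b)) list.
     (\<forall>(a,b)\<in>set xs. smooth_on S a \<and> smooth_on S b) \<and> (\<forall>x\<in>S. u x = (\<Sum>(a,b)\<leftarrow>xs. a x *\<^sub>R b x))"])
  fix u :: "'a \<Rightarrow> 'b"
  assume "\<exists>xs::(('a \<Rightarrow> real) \<times> ('a \<Rightarrow> 'b)) list.
     (\<forall>(a,b)\<in>set xs. smooth_on S a \<and> smooth_on S b) \<and> (\<forall>x\<in>S. u x = (\<Sum>(a,b)\<leftarrow>xs. a x *\<^sub>R b x))"
  then obtain xs :: "(('a \<Rightarrow> real) \<times> ('a \<Rightarrow> 'b)) list" where
    xs: "\<forall>(a,b)\<in>set xs. smooth_on S a \<and> smooth_on S b" and u: "\<forall>x\<in>S. u x = (\<Sum>(a,b)\<leftarrow>xs. a x *\<^sub>R b x)"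
    by blast
  define ys where "ys v = concat (map (\<lambda>(a,b). [(a, \<lambda>x. sderiv S b x v), (\<lambda>x. sderiv S a x v, b)]) xs)" for v
  have ys: "\<forall>(a,b)\<in>set (ys v). smooth_on S a \<and> smooth_on S b" for v
  proof -
    have "smooth_on S a \<and> smooth_on S b" if "(a,b) \<in> set (ys v)" for a b
    proof -
      from that obtain a0 b0 where ab0: "(a0,b0) \<in> set xs"
        and "(a,b) \<in> set [(a0, \<lambda>x. sderiv S b0 x v), (\<lambda>x. sderiv S a0 x v, b0)]"
        unfolding ys_def by auto
      moreover have "smooth_on S a0" "smooth_on S b0" using xs ab0 by auto
      ultimately show ?thesis using sderiv(2)[of S a0 v] sderiv(2)[of S b0 v] by auto
    qed
    then show ?thesis by blast
  qed
  have sum_ys: "(\<Sum>(a,b)\<leftarrow>ys v. a x *\<^sub>R b x) = (\<Sum>(a,b)\<leftarrow>xs. a x *\<^sub>R sderiv S b x v + sderiv S a x v *\<^sub>R b x)" for v x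
    unfolding ys_def by (induction xs) (auto simp: algebra_simps)
  show "\<exists>g'. (\<forall>x\<in>S. (u has_derivative g' x) (at x)) \<and> (\<forall>v. \<exists>xs::(('a \<Rightarrow> real) \<times> ('a \<Rightarrow> 'b)) list.
     (\<forall>(a,b)\<in>set xs. smooth_on S a \<and> smooth_on S b) \<and> (\<forall>x\<in>S. g' x v = (\<Sum>(a,b)\<leftarrow>xs. a x *\<^sub>R b x)))"
  proof (rule exI, intro conjI ballI allI)
    fix x assume x: "x \<in> S"
    show "(u has_derivative (\<lambda>v. \<Sum>(a,b)\<leftarrow>xs. a x *\<^sub>R sderiv S b x v + sderiv S a x v *\<^sub>R b x)) (at x)"
      by (rule has_derivative_transform_within_open[OF has_derivative_scaleR_list[OF xs x] \<open>open S\<close> x])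
         (use u in auto)
  next
    fix v
    show "\<exists>xs'::(('a \<Rightarrow> real) \<times> ('a \<Rightarrow> 'b)) list. (\<forall>(a,b)\<in>set xs'. smooth_on S a \<and> smooth_on S b) \<and>
       (\<forall>x\<in>S. (\<Sum>(a,b)\<leftarrow>xs. a x *\<^sub>R sderiv S b x v + sderiv S a x v *\<^sub>R b x) = (\<Sum>(a,b)\<leftarrow>xs'. a x *\<^sub>R b x))"
      by (rule exI[of _ "ys v"]) (use ys[of v] sum_ys[where v=v] in auto)
  qed
qed (use assms in auto)
lemma smooth_on_scaleR:
  fixes a :: "'a::euclidean_space \<Rightarrow> real" and b :: "'a \<Rightarrow> 'b::real_normed_vector"
  assumes "smooth_on S a" "smooth_on S b"
  shows "smooth_on S (\<lambda>x. a x *\<^sub>R b x)"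
proof -
  have o: "open S" by (rule smooth_on_open[OF assms(1)])
  have "smooth_on S (\<lambda>x. \<Sum>(a,b)\<leftarrow>[(a,b)]. a x *\<^sub>R b x)"
    by (rule smooth_on_scaleR_list[OF o]) (use assms in simp)
  then show ?thesis by simp
qed

lemma smooth_on_mult:
  fixes a b :: "'a::euclidean_space \<Rightarrow> real"
  assumes "smooth_on S a" "smooth_on S b"
  shows "smooth_on S (\<lambda>x. a x * b x)"
  using smooth_on_scaleR[OF assms] by simp

lemma smooth_on_add:
  fixes a b :: "'a::euclidean_space \<Rightarrow> 'b::real_normed_vector"
  assumes "smooth_on S a" "smooth_on S b"
  shows "smooth_on S (\<lambda>x. a x + b x)"
proof -
  have o: "open S" using assms smooth_on_open by blast
  have c: "smooth_on S (\<lambda>x. 1::real)" by (rule smooth_on_const[OF o])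
  have "smooth_on S (\<lambda>x. \<Sum>(a,b)\<leftarrow>[(\<lambda>x. 1, a), (\<lambda>x. 1, b)]. a x *\<^sub>R b x)"
    by (rule smooth_on_scaleR_list[OF o]) (use assms c in simp)
  then show ?thesis by simp
qed

lemma smooth_on_sum:
  fixes a :: "'i \<Rightarrow> 'a::euclidean_space \<Rightarrow> 'b::real_normed_vector"
  assumes "open S" "\<And>i. i \<in> I \<Longrightarrow> smooth_on S (a i)"
  shows "smooth_on S (\<lambda>x. \<Sum>i\<in>I. a i x)"
  using assms(2)
proof (induction I rule: infinite_finite_induct)
  case (infinite A) then show ?case using smooth_on_const[OF assms(1), of 0] by simp
next
  case empty then show ?case using smooth_on_const[OF assms(1), of 0] by simp
next
  case (insert x F)
  have "smooth_on S (\<lambda>y. a x y + (\<Sum>i\<in>F. a i y))"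
    by (rule smooth_on_add) (use insert in auto)
  then show ?case using insert(1,2) by simp
qed

lemma smooth_on_scaleR_const:
  fixes b :: "'a::euclidean_space \<Rightarrow> 'b::real_normed_vector"
  assumes "smooth_on S b"
  shows "smooth_on S (\<lambda>x. c *\<^sub>R b x)"
  using smooth_on_scaleR[OF smooth_on_const[OF smooth_on_open[OF assms]] assms] .

lemma smooth_on_scaleR_const2:
  fixes a :: "'a::euclidean_space \<Rightarrow> real"
  assumes "smooth_on S a"
  shows "smooth_on S (\<lambda>x. a x *\<^sub>R c)"
  using smooth_on_scaleR[OF assms smooth_on_const[OF smooth_on_open[OF assms]]] .

lemma smooth_on_uminus:
  fixes b :: "'a::euclidean_space \<Rightarrow> 'b::real_normed_vector"
  assumes "smooth_on S b"
  shows "smooth_on S (\<lambda>x. - b x)"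
  using smooth_on_scaleR_const[OF assms, of "-1"] by simp

lemma smooth_on_diff:
  fixes a b :: "'a::euclidean_space \<Rightarrow> 'b::real_normed_vector"
  assumes "smooth_on S a" "smooth_on S b"
  shows "smooth_on S (\<lambda>x. a x - b x)"
  using smooth_on_add[OF assms(1) smooth_on_uminus[OF assms(2)]] by simp


lemma linear_basis_expand:
  fixes f :: "'a::euclidean_space \<Rightarrow> 'b::real_vector"
  assumes "linear f"
  shows "f w = (\<Sum>b\<in>Basis. (w \<bullet> b) *\<^sub>R f b)"
proof -
  have "f w = f (\<Sum>b\<in>Basis. (w \<bullet> b) *\<^sub>R b)" by (simp add: euclidean_representation)
  also have "\<dots> = (\<Sum>b\<in>Basis. (w \<bullet> b) *\<^sub>R f b)"
    by (simp add: linear_sum[OF assms] linear_scale[OF assms])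
  finally show ?thesis .
qed

lemma smooth_on_linear_comp:
  fixes c :: "'a::euclidean_space \<Rightarrow> 'b::real_normed_vector" and L :: "'b \<Rightarrow> 'c::real_normed_vector"
  assumes "smooth_on S c" "bounded_linear L"
  shows "smooth_on S (\<lambda>x. L (c x))"
proof (rule smooth_on_coinduct[where P="\<lambda>u. \<exists>c. smooth_on S c \<and> (\<forall>x\<in>S. u x = L (c x))"])
  show "open S" using smooth_on_open[OF assms(1)] .
  fix u :: "'a \<Rightarrow> 'c" assume "\<exists>c. smooth_on S c \<and> (\<forall>x\<in>S. u x = L (c x))"
  then obtain c where c: "smooth_on S c" and u: "\<forall>x\<in>S. u x = L (c x)" by blast
  show "\<exists>g'. (\<forall>x\<in>S. (u has_derivative g' x) (at x)) \<and> (\<forall>v. \<exists>c. smooth_on S c \<and> (\<forall>x\<in>S. g' x v = L (c x)))"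
  proof (rule exI[of _ "\<lambda>x v. L (sderiv S c x v)"], intro conjI ballI allI)
    fix x assume x: "x \<in> S"
    show "(u has_derivative (\<lambda>v. L (sderiv S c x v))) (at x)"
      by (rule has_derivative_transform_within_open[OF bounded_linear.has_derivative[OF assms(2) sderiv(1)[OF c x]] smooth_on_open[OF c] x])
         (use u in auto)
  next
    fix v show "\<exists>c'. smooth_on S c' \<and> (\<forall>x\<in>S. L (sderiv S c x v) = L (c' x))"
      using sderiv(2)[OF c, of v] by blast
  qed
qed (use assms in auto)

lemma smooth_on_precomp_linear:
  fixes c :: "'a::euclidean_space \<Rightarrow> 'b::real_normed_vector" and L :: "'d::euclidean_space \<Rightarrow> 'a"
  assumes "smooth_on S c" "linear L" "T \<subseteq> L -` S" "open T"
  shows "smooth_on T (\<lambda>x. c (L x))"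
proof (rule smooth_on_coinduct[where P="\<lambda>u. \<exists>c. smooth_on S c \<and> (\<forall>x\<in>T. u x = c (L x))"])
  show "open T" by fact
  fix u :: "'d \<Rightarrow> 'b" assume "\<exists>c. smooth_on S c \<and> (\<forall>x\<in>T. u x = c (L x))"
  then obtain c where c: "smooth_on S c" and u: "\<forall>x\<in>T. u x = c (L x)" by blast
  show "\<exists>g'. (\<forall>x\<in>T. (u has_derivative g' x) (at x)) \<and> (\<forall>v. \<exists>c. smooth_on S c \<and> (\<forall>x\<in>T. g' x v = c (L x)))"
  proof (rule exI[of _ "\<lambda>x v. sderiv S c (L x) (L v)"], intro conjI ballI allI)
    fix x assume x: "x \<in> T"
    then have Lx: "L x \<in> S" using assms(3) by auto
    have "((\<lambda>x. c (L x)) has_derivative (\<lambda>v. sderiv S c (L x) (L v))) (at x)"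
      using has_derivative_compose[OF linear_imp_has_derivative[OF assms(2)] sderiv(1)[OF c Lx]]
      by (simp add: o_def)
    then show "(u has_derivative (\<lambda>v. sderiv S c (L x) (L v))) (at x)"
      by (rule has_derivative_transform_within_open[OF _ \<open>open T\<close> x]) (use u in auto)
  next
    fix v show "\<exists>c'. smooth_on S c' \<and> (\<forall>x\<in>T. sderiv S c (L x) (L v) = c' (L x))"
      using sderiv(2)[OF c, of "L v"] by blast
  qed
qed (use assms(1) in blast)

lemma smooth_on_inner_const:
  fixes c :: "'a::euclidean_space \<Rightarrow> 'b::real_inner"
  assumes "smooth_on S c"
  shows "smooth_on S (\<lambda>x. c x \<bullet> w)"
  using smooth_on_linear_comp[OF assms bounded_linear_inner_left] .

lemma smooth_on_Pair:
  fixes a :: "'a::euclidean_space \<Rightarrow> 'b::real_normed_vector" and b :: "'a \<Rightarrow> 'c::real_normed_vector"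
  assumes "smooth_on S a" "smooth_on S b"
  shows "smooth_on S (\<lambda>x. (a x, b x))"
proof -
  have 1: "smooth_on S (\<lambda>x. (a x, 0::'c))"
    using smooth_on_linear_comp[OF assms(1), of "\<lambda>y. (y, 0)"] by (simp add: bounded_linear_Pair bounded_linear_ident bounded_linear_zero)
  have 2: "smooth_on S (\<lambda>x. (0::'b, b x))"
    using smooth_on_linear_comp[OF assms(2), of "\<lambda>y. (0, y)"] by (simp add: bounded_linear_Pair bounded_linear_ident bounded_linear_zero)
  show ?thesis using smooth_on_add[OF 1 2] by simp
qed

lemma smooth_on_fst: assumes "open S" shows "smooth_on S fst"
  using smooth_on_linear[OF assms bounded_linear.linear[OF bounded_linear_fst]] .
lemma smooth_on_snd: assumes "open S" shows "smooth_on S snd"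
  using smooth_on_linear[OF assms bounded_linear.linear[OF bounded_linear_snd]] .
lemma smooth_on_id: assumes "open S" shows "smooth_on S (\<lambda>x. x)"
  using smooth_on_linear[OF assms bounded_linear.linear[OF bounded_linear_ident]] .


lemma smooth_on_compose_pair:
  fixes h :: "'a::euclidean_space \<Rightarrow> 'b::euclidean_space" and G :: "'a \<times> 'b \<Rightarrow> 'c::real_normed_vector"
  assumes h: "smooth_on S h" and G0: "smooth_on T G" and ST: "\<And>x. x \<in> S \<Longrightarrow> (x, h x) \<in> T"
  shows "smooth_on S (\<lambda>x. G (x, h x))"
proof -
  have oS: "open S" using smooth_on_open[OF h] .
  define T' where "T' = T \<inter> (S \<times> UNIV)"
  have oT': "open T'" unfolding T'_def using smooth_on_open[OF G0] oS by (auto intro: open_Times)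
  have ST': "(x, h x) \<in> T'" if "x \<in> S" for x using ST that unfolding T'_def by auto
  have T'S: "T' \<subseteq> fst -` S" unfolding T'_def by auto
  show ?thesis
  proof (rule smooth_on_coinduct[where P="\<lambda>u. \<exists>G. smooth_on T' G \<and> (\<forall>x\<in>S. u x = G (x, h x))"])
    show "open S" by fact
    show "\<exists>G'. smooth_on T' G' \<and> (\<forall>x\<in>S. G (x, h x) = G' (x, h x))"
      using smooth_on_subset[OF G0 oT'] unfolding T'_def by blast
    fix u :: "'a \<Rightarrow> 'c" assume "\<exists>G. smooth_on T' G \<and> (\<forall>x\<in>S. u x = G (x, h x))"
    then obtain G where G: "smooth_on T' G" and u: "\<forall>x\<in>S. u x = G (x, h x)" by blast
    define G' where "G' = sderiv T' G"
    define h' where "h' = sderiv S h"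
    have G'd: "\<And>z. z \<in> T' \<Longrightarrow> (G has_derivative G' z) (at z)" unfolding G'_def by (rule sderiv(1)[OF G])
    have h'd: "\<And>x. x \<in> S \<Longrightarrow> (h has_derivative h' x) (at x)" unfolding h'_def by (rule sderiv(1)[OF h])
    have G'lin: "linear (G' z)" if "z \<in> T'" for z using G'd[OF that] has_derivative_linear by blast
    show "\<exists>g'. (\<forall>x\<in>S. (u has_derivative g' x) (at x)) \<and> (\<forall>v. \<exists>G. smooth_on T' G \<and> (\<forall>x\<in>S. g' x v = G (x, h x)))"
    proof (rule exI[of _ "\<lambda>x v. G' (x, h x) (v, h' x v)"], intro conjI ballI allI)
      fix x assume x: "x \<in> S"
      have "((\<lambda>x. G (x, h x)) has_derivative (\<lambda>v. G' (x, h x) (v, h' x v))) (at x)"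
        using has_derivative_compose[OF has_derivative_Pair[OF has_derivative_ident h'd[OF x]] G'd[OF ST'[OF x]]]
        by (simp add: o_def)
      then show "(u has_derivative (\<lambda>v. G' (x, h x) (v, h' x v))) (at x)"
        by (rule has_derivative_transform_within_open[OF _ oS x]) (use u in auto)
    next
      fix v
      define Gt where "Gt z = (\<Sum>b\<in>Basis. ((v, h' (fst z) v) \<bullet> b) *\<^sub>R G' z b)" for z
      have "smooth_on T' Gt"
        unfolding Gt_def
      proof (rule smooth_on_sum[OF oT'], rule smooth_on_scaleR)
        fix b :: "'a \<times> 'b"
        show "smooth_on T' (\<lambda>z. G' z b)" unfolding G'_def by (rule sderiv(2)[OF G])
        have "smooth_on T' (\<lambda>z. h' (fst z) v)"
          by (rule smooth_on_precomp_linear[OF sderiv(2)[OF h] bounded_linear.linear[OF bounded_linear_fst] T'S oT', unfolded h'_def[symmetric]])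
        then have "smooth_on T' (\<lambda>z. (v, h' (fst z) v))"
          by (rule smooth_on_Pair[OF smooth_on_const[OF oT']])
        then show "smooth_on T' (\<lambda>z. (v, h' (fst z) v) \<bullet> b)"
          by (rule smooth_on_inner_const)
      qed
      moreover have "\<forall>x\<in>S. G' (x, h x) (v, h' x v) = Gt (x, h x)"
        unfolding Gt_def using linear_basis_expand[OF G'lin[OF ST']] by simp
      ultimately show "\<exists>G. smooth_on T' G \<and> (\<forall>x\<in>S. G' (x, h x) (v, h' x v) = G (x, h x))"
        by blast
    qed
  qed
qed

lemma smooth_on_compose:
  fixes h :: "'a::euclidean_space \<Rightarrow> 'b::euclidean_space" and G :: "'b \<Rightarrow> 'c::real_normed_vector"
  assumes h: "smooth_on S h" and G: "smooth_on T G" and ST: "\<And>x. x \<in> S \<Longrightarrow> h x \<in> T"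
  shows "smooth_on S (\<lambda>x. G (h x))"
proof -
  have oT: "open T" using smooth_on_open[OF G] .
  have "smooth_on (UNIV \<times> T) (\<lambda>z. G (snd z))"
    by (rule smooth_on_precomp_linear[OF G bounded_linear.linear[OF bounded_linear_snd]])
       (auto intro: open_Times oT)
  from smooth_on_compose_pair[OF h this] ST show ?thesis by simp
qed


lemma smooth_on_bilinear:
  fixes B :: "'a::euclidean_space \<Rightarrow> 'b::euclidean_space \<Rightarrow> 'c::real_normed_vector"
    and a :: "'d::euclidean_space \<Rightarrow> 'a" and b :: "'d \<Rightarrow> 'b"
  assumes B: "bounded_bilinear B" and a: "smooth_on S a" and b: "smooth_on S b"
  shows "smooth_on S (\<lambda>x. B (a x) (b x))"
proof -
  have o: "open S" using smooth_on_open[OF a] .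
  have e: "B p q = (\<Sum>i\<in>Basis. (p \<bullet> i) *\<^sub>R (\<Sum>j\<in>Basis. (q \<bullet> j) *\<^sub>R B i j))" for p q
  proof -
    have lin1: "linear (\<lambda>x. B x q)" by (rule bounded_linear.linear[OF bounded_bilinear.bounded_linear_left[OF B]])
    have lin2: "linear (B i)" for i by (rule bounded_linear.linear[OF bounded_bilinear.bounded_linear_right[OF B]])
    have "B p q = (\<Sum>i\<in>Basis. (p \<bullet> i) *\<^sub>R B i q)"
      by (rule linear_basis_expand[OF lin1, of p, simplified])
    also have "\<dots> = (\<Sum>i\<in>Basis. (p \<bullet> i) *\<^sub>R (\<Sum>j\<in>Basis. (q \<bullet> j) *\<^sub>R B i j))"
      by (rule sum.cong[OF refl]) (subst linear_basis_expand[OF lin2], rule refl)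
    finally show ?thesis .
  qed
  have ai: "smooth_on S (\<lambda>x. a x \<bullet> i)" for i by (rule smooth_on_inner_const[OF a])
  have bj: "smooth_on S (\<lambda>x. b x \<bullet> j)" for j by (rule smooth_on_inner_const[OF b])
  have "smooth_on S (\<lambda>x. (\<Sum>j\<in>Basis. (b x \<bullet> j) *\<^sub>R B i j))" for i
    by (rule smooth_on_sum[OF o], rule smooth_on_scaleR_const2[OF bj])
  then have "smooth_on S (\<lambda>x. (a x \<bullet> i) *\<^sub>R (\<Sum>j\<in>Basis. (b x \<bullet> j) *\<^sub>R B i j))" for i
    by (rule smooth_on_scaleR[OF ai])
  then have "smooth_on S (\<lambda>x. \<Sum>i\<in>Basis. (a x \<bullet> i) *\<^sub>R (\<Sum>j\<in>Basis. (b x \<bullet> j) *\<^sub>R B i j))"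
    by (rule smooth_on_sum[OF o])
  then show ?thesis by (rule smooth_on_cong) (rule e)
qed

lemma local_inverse:
  fixes \<Psi> :: "'a::euclidean_space \<Rightarrow> 'a"
  assumes sm: "smooth_on \<Omega> \<Psi>" and x0: "x0 \<in> \<Omega>" and bij0: "bij (sderiv \<Omega> \<Psi> x0)"
  obtains U V g where "open U" "U \<subseteq> \<Omega>" "x0 \<in> U" "open V" "\<Psi> x0 \<in> V" "homeomorphism U V \<Psi> g"
    "\<And>y. y \<in> V \<Longrightarrow> (g has_derivative inv (sderiv \<Omega> \<Psi> (g y))) (at y)"
    "\<And>y. y \<in> V \<Longrightarrow> bij (sderiv \<Omega> \<Psi> (g y))"
proof -
  have oO: "open \<Omega>" using smooth_on_open[OF sm] .
  have der: "(\<Psi> has_derivative sderiv \<Omega> \<Psi> x) (at x)" if "x \<in> \<Omega>" for x by (rule sderiv(1)[OF sm that])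
  have bl: "bounded_linear (sderiv \<Omega> \<Psi> x)" if "x \<in> \<Omega>" for x
    using der[OF that] has_derivative_bounded_linear by blast
  define f' where "f' x = Blinfun (sderiv \<Omega> \<Psi> x)" for x
  have f'a: "blinfun_apply (f' x) = sderiv \<Omega> \<Psi> x" if "x \<in> \<Omega>" for x
    unfolding f'_def using bl[OF that] by (simp add: bounded_linear_Blinfun_apply)
  have derf: "(\<Psi> has_derivative blinfun_apply (f' x)) (at x)" if "x \<in> \<Omega>" for x
    using der[OF that] f'a[OF that] by simp
  have contf: "continuous_on \<Omega> f'"
  proof (rule continuous_on_blinfun_componentwise)
    fix i :: 'a
    have "continuous_on \<Omega> (\<lambda>x. sderiv \<Omega> \<Psi> x i)"
      by (rule smooth_on_continuous_on[OF sderiv(2)[OF sm]])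
    then show "continuous_on \<Omega> (\<lambda>x. blinfun_apply (f' x) i)"
      by (rule continuous_on_eq) (auto simp: f'a)
  qed
  define L where "L = sderiv \<Omega> \<Psi> x0"
  have Lbl: "bounded_linear L" using bl[OF x0] unfolding L_def .
  have Linj: "inj L" using bij0 unfolding L_def bij_def by blast
  have iLbl: "bounded_linear (inv L)" by (rule inj_linear_imp_inv_bounded_linear[OF Lbl Linj])
  have invf: "Blinfun (inv L) o\<^sub>L f' x0 = id_blinfun"
    by (rule blinfun_eqI) (simp add: f'a[OF x0] bounded_linear_Blinfun_apply[OF iLbl] L_def[symmetric] inv_f_f[OF Linj])
  obtain U V g g' where U: "open U" "U \<subseteq> \<Omega>" "x0 \<in> U" and V: "open V" "\<Psi> x0 \<in> V" and hom: "homeomorphism U V \<Psi> g"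
    and gd: "\<And>y. y \<in> V \<Longrightarrow> (g has_derivative (g' y)) (at y)"
    and g': "\<And>y. y \<in> V \<Longrightarrow> g' y = inv (blinfun_apply (f'(g y)))"
    and bij: "\<And>y. y \<in> V \<Longrightarrow> bij (blinfun_apply (f'(g y)))"
    using inverse_function_theorem[OF oO derf contf x0 invf] by blast
  have gV: "g y \<in> \<Omega>" if "y \<in> V" for y
    using hom that U(2) unfolding homeomorphism_def by auto
  show ?thesis
  proof (rule that[OF U V hom])
    show "(g has_derivative inv (sderiv \<Omega> \<Psi> (g y))) (at y)" if "y \<in> V" for y
      using gd[OF that] g'[OF that] f'a[OF gV[OF that]] by simp
    show "bij (sderiv \<Omega> \<Psi> (g y))" if "y \<in> V" for y
      using bij[OF that] f'a[OF gV[OF that]] by simp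
  qed
qed


lemma inv_linear_family_derivative:
  fixes M :: "'c::euclidean_space \<Rightarrow> 'd::euclidean_space \<Rightarrow> 'd"
  assumes oO: "open \<Omega>" and sm: "\<And>y. smooth_on \<Omega> (\<lambda>z. M z y)"
    and lin: "\<And>z. z \<in> \<Omega> \<Longrightarrow> linear (M z)" and bj: "\<And>z. z \<in> \<Omega> \<Longrightarrow> bij (M z)"
    and z0: "z0 \<in> \<Omega>"
  shows "((\<lambda>z. inv (M z) w) has_derivative
          (\<lambda>v. - inv (M z0) (\<Sum>b\<in>Basis. (inv (M z0) w \<bullet> b) *\<^sub>R sderiv \<Omega> (\<lambda>z. M z b) z0 v))) (at z0)"
proof -
  define m where "m b = sderiv \<Omega> (\<lambda>z. M z b)" for b
  have md: "((\<lambda>z. M z b) has_derivative m b z) (at z)" if "z \<in> \<Omega>" for z b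
    unfolding m_def by (rule sderiv(1)[OF sm that])
  have mlin: "linear (m b z)" if "z \<in> \<Omega>" for z b using md[OF that] has_derivative_linear by blast
  define \<Omega>2 where "\<Omega>2 = \<Omega> \<times> (UNIV :: 'd set)"
  have o2: "open \<Omega>2" unfolding \<Omega>2_def using oO by (auto intro: open_Times)
  define \<Psi> where "\<Psi> p = (fst p, M (fst p) (snd p))" for p :: "'c \<times> 'd"
  have Mexp: "M z y = (\<Sum>b\<in>Basis. (y \<bullet> b) *\<^sub>R M z b)" if "z \<in> \<Omega>" for z y
    by (rule linear_basis_expand[OF lin[OF that]])
  have smPsi: "smooth_on \<Omega>2 \<Psi>"
  proof -
    have "smooth_on \<Omega>2 (\<lambda>p. M (fst p) b)" for b
      by (rule smooth_on_precomp_linear[OF sm bounded_linear.linear[OF bounded_linear_fst] _ o2])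
         (auto simp: \<Omega>2_def)
    then have "smooth_on \<Omega>2 (\<lambda>p. (snd p \<bullet> b) *\<^sub>R M (fst p) b)" for b
      by (rule smooth_on_scaleR[OF smooth_on_inner_const[OF smooth_on_snd[OF o2]]])
    then have "smooth_on \<Omega>2 (\<lambda>p. \<Sum>b\<in>Basis. (snd p \<bullet> b) *\<^sub>R M (fst p) b)"
      by (rule smooth_on_sum[OF o2])
    then have "smooth_on \<Omega>2 (\<lambda>p. (fst p, \<Sum>b\<in>Basis. (snd p \<bullet> b) *\<^sub>R M (fst p) b))"
      by (rule smooth_on_Pair[OF smooth_on_fst[OF o2]])
    then show ?thesis
      by (rule smooth_on_cong) (auto simp: \<Psi>_def \<Omega>2_def Mexp)
  qed
  define Pd where "Pd p h = (fst h, M (fst p) (snd h) + (\<Sum>b\<in>Basis. (snd p \<bullet> b) *\<^sub>R m b (fst p) (fst h)))" for p h :: "'c \<times> 'd"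
  have Psid: "(\<Psi> has_derivative Pd p) (at p)" if p: "p \<in> \<Omega>2" for p
  proof -
    have fp: "fst p \<in> \<Omega>" using p unfolding \<Omega>2_def by auto
    have d1: "((\<lambda>q. M (fst q) b) has_derivative (\<lambda>h. m b (fst p) (fst h))) (at p)" for b
      using has_derivative_compose[OF has_derivative_fst[OF has_derivative_ident] md[OF fp]] by (simp add: o_def)
    have d2: "((\<lambda>q. snd q \<bullet> b) has_derivative (\<lambda>h. snd h \<bullet> b)) (at p)" for b
      by (rule has_derivative_inner_left[OF has_derivative_snd[OF has_derivative_ident]])
    have "((\<lambda>q. (fst q, \<Sum>b\<in>Basis. (snd q \<bullet> b) *\<^sub>R M (fst q) b)) has_derivative
         (\<lambda>h. (fst h, \<Sum>b\<in>Basis. (snd p \<bullet> b) *\<^sub>R m b (fst p) (fst h) + (snd h \<bullet> b) *\<^sub>R M (fst p) b))) (at p)"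
      by (intro has_derivative_Pair has_derivative_fst has_derivative_ident has_derivative_sum has_derivative_scaleR d1 d2)
    moreover have "(\<lambda>h. (fst h, \<Sum>b\<in>Basis. (snd p \<bullet> b) *\<^sub>R m b (fst p) (fst h) + (snd h \<bullet> b) *\<^sub>R M (fst p) b)) = Pd p"
      by (rule ext) (simp add: Pd_def sum.distrib Mexp[OF fp, of "snd _"] add.commute)
    ultimately have "((\<lambda>q. (fst q, \<Sum>b\<in>Basis. (snd q \<bullet> b) *\<^sub>R M (fst q) b)) has_derivative Pd p) (at p)" by simp
    then show ?thesis
      by (rule has_derivative_transform_within_open[OF _ o2 p]) (auto simp: \<Psi>_def \<Omega>2_def Mexp)
  qed
  have sdPsi: "sderiv \<Omega>2 \<Psi> p = Pd p" if "p \<in> \<Omega>2" for p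
    by (rule sderiv_unique[OF smPsi that Psid[OF that]])
  define y0 where "y0 = inv (M z0) w"
  define p0 where "p0 = (z0, y0)"
  have p0: "p0 \<in> \<Omega>2" unfolding p0_def \<Omega>2_def using z0 by auto
  have linPd: "linear (Pd p0)" using Psid[OF p0] has_derivative_linear by blast
  have injPd: "inj (Pd p0)"
  proof (subst linear_injective_0[OF linPd], intro allI impI)
    fix h :: "'c \<times> 'd" assume h: "Pd p0 h = 0"
    then have a: "fst h = 0" unfolding Pd_def by (simp add: prod_eq_iff)
    have "m b z0 0 = 0" for b using mlin[OF z0] linear_0 by blast
    then have "M z0 (snd h) = 0" using h a unfolding Pd_def p0_def by (simp add: prod_eq_iff)
    then have "snd h = 0" using bj[OF z0] lin[OF z0] by (metis bij_def linear_injective_0)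
    with a show "h = 0" by (simp add: prod_eq_iff)
  qed
  have bijPd: "bij (Pd p0)"
    using injPd linear_injective_imp_surjective[OF linPd injPd] by (simp add: bij_def)
  obtain U V g where U: "open U" "U \<subseteq> \<Omega>2" "p0 \<in> U" and V: "open V" "\<Psi> p0 \<in> V"
    and hom: "homeomorphism U V \<Psi> g"
    and gd: "\<And>y. y \<in> V \<Longrightarrow> (g has_derivative inv (sderiv \<Omega>2 \<Psi> (g y))) (at y)"
    using local_inverse[OF smPsi p0] bijPd sdPsi[OF p0] by metis
  have Psip0: "\<Psi> p0 = (z0, w)" unfolding \<Psi>_def p0_def y0_def
    using bj[OF z0] by (simp add: bij_is_surj surj_f_inv_f)
  have gp0: "g (z0, w) = p0" using hom U(3) Psip0 unfolding homeomorphism_def by metis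
  define T where "T = (\<lambda>z. (z, w)) -` V"
  have oT: "open T" unfolding T_def
    by (rule open_vimage[OF V(1)]) (intro continuous_intros)
  have z0T: "z0 \<in> T" unfolding T_def using V(2) Psip0 by simp
  have eq: "inv (M z) w = snd (g (z, w))" if "z \<in> T" for z
  proof -
    have zV: "(z, w) \<in> V" using that unfolding T_def by simp
    have gU: "g (z, w) \<in> U" and Pg: "\<Psi> (g (z, w)) = (z, w)"
      using hom zV unfolding homeomorphism_def by auto
    then have "fst (g (z,w)) = z" and Mz: "M z (snd (g (z, w))) = w" unfolding \<Psi>_def by (auto simp: prod_eq_iff)
    moreover have "z \<in> \<Omega>" using gU U(2) \<open>fst (g (z,w)) = z\<close> unfolding \<Omega>2_def by auto
    ultimately show ?thesis using bj by (metis bij_is_inj inv_f_f)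
  qed
  have gd0: "(g has_derivative inv (Pd p0)) (at (z0, w))"
    using gd[OF V(2)[unfolded Psip0]] gp0 sdPsi[OF p0] by simp
  have "((\<lambda>z. snd (g (z, w))) has_derivative (\<lambda>v. snd (inv (Pd p0) (v, 0)))) (at z0)"
    using has_derivative_compose[OF has_derivative_Pair[OF has_derivative_ident has_derivative_const] gd0]
    by (intro has_derivative_snd) (simp add: o_def)
  moreover have "snd (inv (Pd p0) (v, 0)) = - inv (M z0) (\<Sum>b\<in>Basis. (inv (M z0) w \<bullet> b) *\<^sub>R sderiv \<Omega> (\<lambda>z. M z b) z0 v)" for v
  proof -
    define c where "c = - inv (M z0) (\<Sum>b\<in>Basis. (y0 \<bullet> b) *\<^sub>R m b z0 v)"
    have "M z0 c = - (\<Sum>b\<in>Basis. (y0 \<bullet> b) *\<^sub>R m b z0 v)"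
      unfolding c_def using lin[OF z0] bj[OF z0] by (simp add: linear_neg bij_is_surj surj_f_inv_f)
    then have "Pd p0 (v, c) = (v, 0)" unfolding Pd_def p0_def by simp
    then have "inv (Pd p0) (v, 0) = (v, c)" using injPd by (metis inv_f_f)
    then show ?thesis unfolding c_def y0_def m_def by simp
  qed
  ultimately have "((\<lambda>z. snd (g (z, w))) has_derivative
          (\<lambda>v. - inv (M z0) (\<Sum>b\<in>Basis. (inv (M z0) w \<bullet> b) *\<^sub>R sderiv \<Omega> (\<lambda>z. M z b) z0 v))) (at z0)"
    by simp
  then show ?thesis
    by (rule has_derivative_transform_within_open[OF _ oT z0T]) (simp add: eq)
qed

lemma linear_sum_scaleR:
  assumes "linear f"
  shows "f (\<Sum>b\<in>B. c b *\<^sub>R q b) = (\<Sum>b\<in>B. c b *\<^sub>R f (q b))"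
proof -
  have "f (\<Sum>b\<in>B. c b *\<^sub>R q b) = (\<Sum>b\<in>B. f (c b *\<^sub>R q b))"
    by (rule linear_sum[OF assms])
  also have "\<dots> = (\<Sum>b\<in>B. c b *\<^sub>R f (q b))"
    by (rule sum.cong[OF refl]) (rule linear_scale[OF assms])
  finally show ?thesis .
qed

inductive invalg :: "'c::euclidean_space set \<Rightarrow> ('c \<Rightarrow> 'd::euclidean_space \<Rightarrow> 'd) \<Rightarrow> ('c \<Rightarrow> real) \<Rightarrow> bool"
  for \<Omega> M where
  sm: "smooth_on \<Omega> c \<Longrightarrow> invalg \<Omega> M c"
| gen: "invalg \<Omega> M (\<lambda>z. inv (M z) w \<bullet> e)"
| add: "invalg \<Omega> M a \<Longrightarrow> invalg \<Omega> M b \<Longrightarrow> invalg \<Omega> M (\<lambda>z. a z + b z)"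
| mult: "invalg \<Omega> M a \<Longrightarrow> invalg \<Omega> M b \<Longrightarrow> invalg \<Omega> M (\<lambda>z. a z * b z)"
| cong: "invalg \<Omega> M a \<Longrightarrow> (\<And>z. z \<in> \<Omega> \<Longrightarrow> b z = a z) \<Longrightarrow> invalg \<Omega> M b"

lemma invalg_sum:
  assumes "open \<Omega>" "\<And>i. i \<in> I \<Longrightarrow> invalg \<Omega> M (a i)"
  shows "invalg \<Omega> M (\<lambda>z. \<Sum>i\<in>I. a i z)"
  using assms(2)
proof (induction I rule: infinite_finite_induct)
  case (infinite A) then show ?case using invalg.sm[OF smooth_on_const[OF assms(1), of 0]] by simp
next
  case empty then show ?case using invalg.sm[OF smooth_on_const[OF assms(1), of 0]] by simp
next
  case (insert x F)
  have "invalg \<Omega> M (\<lambda>z. a x z + (\<Sum>i\<in>F. a i z))"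
    by (rule invalg.add) (use insert in auto)
  then show ?case using insert(1,2) by simp
qed

lemma invalg_deriv:
  fixes M :: "'c::euclidean_space \<Rightarrow> 'd::euclidean_space \<Rightarrow> 'd"
  assumes oO: "open \<Omega>" and sm: "\<And>y. smooth_on \<Omega> (\<lambda>z. M z y)"
    and lin: "\<And>z. z \<in> \<Omega> \<Longrightarrow> linear (M z)" and bj: "\<And>z. z \<in> \<Omega> \<Longrightarrow> bij (M z)"
  shows "invalg \<Omega> M c \<Longrightarrow> \<exists>c'. (\<forall>z\<in>\<Omega>. (c has_derivative c' z) (at z)) \<and> (\<forall>v. invalg \<Omega> M (\<lambda>z. c' z v))"
proof (induction rule: invalg.induct)
  case (sm c)
  then show ?case using sderiv[OF sm.hyps] invalg.sm by blast
next
  case (gen w e)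
  define m where "m b = sderiv \<Omega> (\<lambda>z. M z b)" for b
  have invlin: "linear (inv (M z))" if "z \<in> \<Omega>" for z
    using lin[OF that] bj[OF that] by (simp add: bij_is_inj inj_linear_imp_inv_linear)
  have ie: "inv (M z) q \<bullet> e = (\<Sum>c\<in>Basis. (q \<bullet> c) * (inv (M z) c \<bullet> e))" if "z \<in> \<Omega>" for z q
    by (subst linear_basis_expand[OF invlin[OF that]]) (simp add: inner_sum_left)
  define D where "D z v = - inv (M z) (\<Sum>b\<in>Basis. (inv (M z) w \<bullet> b) *\<^sub>R m b z v) \<bullet> e" for z v
  show ?case
  proof (rule exI[of _ D], intro conjI ballI allI)
    fix z assume z: "z \<in> \<Omega>"
    show "((\<lambda>z. inv (M z) w \<bullet> e) has_derivative D z) (at z)"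
      unfolding D_def m_def
      using has_derivative_inner_left[OF inv_linear_family_derivative[OF oO sm lin bj z, of w], of e]
      by simp
  next
    fix v
    define R where "R z = - (\<Sum>b\<in>Basis. (inv (M z) w \<bullet> b) * (\<Sum>c\<in>Basis. (m b z v \<bullet> c) * (inv (M z) c \<bullet> e)))" for z
    have "invalg \<Omega> M R"
      unfolding R_def
    proof (rule invalg.mult[OF invalg.sm[OF smooth_on_const[OF oO, of "-1"]], simplified])
      show "invalg \<Omega> M (\<lambda>z. \<Sum>b\<in>Basis. (inv (M z) w \<bullet> b) * (\<Sum>c\<in>Basis. (m b z v \<bullet> c) * (inv (M z) c \<bullet> e)))"
      proof (rule invalg_sum[OF oO], rule invalg.mult[OF invalg.gen], rule invalg_sum[OF oO], rule invalg.mult[OF _ invalg.gen])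
        fix b c :: 'd
        show "invalg \<Omega> M (\<lambda>z. m b z v \<bullet> c)"
          unfolding m_def by (rule invalg.sm[OF smooth_on_inner_const[OF sderiv(2)[OF sm]]])
      qed
    qed
    moreover have "D z v = R z" if "z \<in> \<Omega>" for z
    proof -
      have "D z v = - (\<Sum>b\<in>Basis. (inv (M z) w \<bullet> b) * (inv (M z) (m b z v) \<bullet> e))"
        unfolding D_def
        by (simp only: linear_sum_scaleR[OF invlin[OF that]] inner_sum_left inner_scaleR_left inner_minus_left)
      also have "\<dots> = R z" unfolding R_def
        by (rule arg_cong[where f=uminus], rule sum.cong[OF refl], subst ie[OF that], rule refl)
      finally show ?thesis .
    qed
    ultimately show "invalg \<Omega> M (\<lambda>z. D z v)" by (rule invalg.cong)
  qed
next
  case (add a b)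
  from add.IH obtain a' b' where a': "\<forall>z\<in>\<Omega>. (a has_derivative a' z) (at z)" "\<forall>v. invalg \<Omega> M (\<lambda>z. a' z v)"
    and b': "\<forall>z\<in>\<Omega>. (b has_derivative b' z) (at z)" "\<forall>v. invalg \<Omega> M (\<lambda>z. b' z v)" by blast
  show ?case
    by (rule exI[of _ "\<lambda>z v. a' z v + b' z v"]) (use a' b' in \<open>simp add: has_derivative_add invalg.add\<close>)
next
  case (mult a b)
  from mult.IH obtain a' b' where a': "\<forall>z\<in>\<Omega>. (a has_derivative a' z) (at z)" "\<forall>v. invalg \<Omega> M (\<lambda>z. a' z v)"
    and b': "\<forall>z\<in>\<Omega>. (b has_derivative b' z) (at z)" "\<forall>v. invalg \<Omega> M (\<lambda>z. b' z v)" by blast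
  show ?case
  proof (rule exI[of _ "\<lambda>z v. a z * b' z v + a' z v * b z"], intro conjI ballI allI)
    fix z assume "z \<in> \<Omega>"
    then show "((\<lambda>z. a z * b z) has_derivative (\<lambda>v. a z * b' z v + a' z v * b z)) (at z)"
      using a' b' by (auto intro: has_derivative_mult)
  next
    fix v show "invalg \<Omega> M (\<lambda>z. a z * b' z v + a' z v * b z)"
      using a' b' mult.hyps by (intro invalg.add invalg.mult) auto
  qed
next
  case (cong a b)
  from cong.IH obtain a' where a': "\<forall>z\<in>\<Omega>. (a has_derivative a' z) (at z)" "\<forall>v. invalg \<Omega> M (\<lambda>z. a' z v)" by blast
  show ?case
  proof (rule exI[of _ a'], intro conjI ballI allI)
    fix z assume z: "z \<in> \<Omega>"
    show "(b has_derivative a' z) (at z)"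
      by (rule has_derivative_transform_within_open[OF _ oO z]) (use a' z cong.hyps(2) in auto)
  qed (use a' in auto)
qed

lemma smooth_on_inv_linear:
  fixes M :: "'c::euclidean_space \<Rightarrow> 'd::euclidean_space \<Rightarrow> 'd"
  assumes oO: "open \<Omega>" and sm: "\<And>y. smooth_on \<Omega> (\<lambda>z. M z y)"
    and lin: "\<And>z. z \<in> \<Omega> \<Longrightarrow> linear (M z)" and bj: "\<And>z. z \<in> \<Omega> \<Longrightarrow> bij (M z)"
  shows "smooth_on \<Omega> (\<lambda>z. inv (M z) w)"
proof -
  have alg: "smooth_on \<Omega> c" if "invalg \<Omega> M c" for c
    by (rule smooth_on_coinduct[where P="invalg \<Omega> M", OF oO that invalg_deriv[OF oO sm lin bj]])
  have "smooth_on \<Omega> (\<lambda>z. \<Sum>e\<in>Basis. (inv (M z) w \<bullet> e) *\<^sub>R e)"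
    by (rule smooth_on_sum[OF oO], rule smooth_on_scaleR_const2, rule alg, rule invalg.gen)
  then show ?thesis by (simp add: euclidean_representation)
qed


lemma smooth_local_inverse:
  fixes \<Psi> :: "'a::euclidean_space \<Rightarrow> 'a"
  assumes sm: "smooth_on \<Omega> \<Psi>" and x0: "x0 \<in> \<Omega>" and bij0: "bij (sderiv \<Omega> \<Psi> x0)"
  obtains U V g where "open U" "U \<subseteq> \<Omega>" "x0 \<in> U" "open V" "\<Psi> x0 \<in> V" "homeomorphism U V \<Psi> g"
    "\<And>y. y \<in> V \<Longrightarrow> (g has_derivative inv (sderiv \<Omega> \<Psi> (g y))) (at y)"
    "smooth_on V g"
proof -
  obtain U V g where U: "open U" "U \<subseteq> \<Omega>" "x0 \<in> U" and V: "open V" "\<Psi> x0 \<in> V" and hom: "homeomorphism U V \<Psi> g"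
    and gd: "\<And>y. y \<in> V \<Longrightarrow> (g has_derivative inv (sderiv \<Omega> \<Psi> (g y))) (at y)"
    and bj: "\<And>y. y \<in> V \<Longrightarrow> bij (sderiv \<Omega> \<Psi> (g y))"
    using local_inverse[OF sm x0 bij0] by metis
  have gVU: "g y \<in> U" if "y \<in> V" for y using hom that unfolding homeomorphism_def by auto
  have bjU: "bij (sderiv \<Omega> \<Psi> q)" if "q \<in> U" for q
  proof -
    have "\<Psi> q \<in> V" "g (\<Psi> q) = q" using hom that unfolding homeomorphism_def by auto
    then show ?thesis using bj by metis
  qed
  have linU: "linear (sderiv \<Omega> \<Psi> q)" if "q \<in> U" for q
    using sderiv(1)[OF sm] that U(2) has_derivative_linear by blast
  have smM: "smooth_on U (\<lambda>q. sderiv \<Omega> \<Psi> q y)" for y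
    by (rule smooth_on_subset[OF sderiv(2)[OF sm] U(1,2)])
  have smI: "smooth_on U (\<lambda>q. inv (sderiv \<Omega> \<Psi> q) w)" for w
    by (rule smooth_on_inv_linear[OF U(1) smM linU bjU])
  have "smooth_on V g"
  proof (rule smooth_on_coinduct[where P="\<lambda>u. \<exists>G. smooth_on U G \<and> (\<forall>y\<in>V. u y = G (g y))"])
    show "open V" by fact
    show "\<exists>G. smooth_on U G \<and> (\<forall>y\<in>V. g y = G (g y))"
      using smooth_on_id[OF U(1)] by blast
    fix u :: "'a \<Rightarrow> 'a" assume "\<exists>G. smooth_on U G \<and> (\<forall>y\<in>V. u y = G (g y))"
    then obtain G where G: "smooth_on U G" and u: "\<forall>y\<in>V. u y = G (g y)" by blast
    define G' where "G' = sderiv U G"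
    have G'd: "(G has_derivative G' q) (at q)" if "q \<in> U" for q unfolding G'_def by (rule sderiv(1)[OF G that])
    have G'lin: "linear (G' q)" if "q \<in> U" for q using G'd[OF that] has_derivative_linear by blast
    show "\<exists>g'. (\<forall>y\<in>V. (u has_derivative g' y) (at y)) \<and> (\<forall>v. \<exists>G. smooth_on U G \<and> (\<forall>y\<in>V. g' y v = G (g y)))"
    proof (rule exI[of _ "\<lambda>y v. G' (g y) (inv (sderiv \<Omega> \<Psi> (g y)) v)"], intro conjI ballI allI)
      fix y assume y: "y \<in> V"
      have "((\<lambda>y. G (g y)) has_derivative (\<lambda>v. G' (g y) (inv (sderiv \<Omega> \<Psi> (g y)) v))) (at y)"
        using has_derivative_compose[OF gd[OF y] G'd[OF gVU[OF y]]] by (simp add: o_def)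
      then show "(u has_derivative (\<lambda>v. G' (g y) (inv (sderiv \<Omega> \<Psi> (g y)) v))) (at y)"
        by (rule has_derivative_transform_within_open[OF _ V(1) y]) (use u in auto)
    next
      fix v
      define Gt where "Gt q = (\<Sum>b\<in>Basis. (inv (sderiv \<Omega> \<Psi> q) v \<bullet> b) *\<^sub>R G' q b)" for q
      have "smooth_on U Gt" unfolding Gt_def
        by (rule smooth_on_sum[OF U(1)], rule smooth_on_scaleR[OF smooth_on_inner_const[OF smI]],
            unfold G'_def, rule sderiv(2)[OF G])
      moreover have "G' (g y) (inv (sderiv \<Omega> \<Psi> (g y)) v) = Gt (g y)" if "y \<in> V" for y
        unfolding Gt_def by (rule linear_basis_expand[OF G'lin[OF gVU[OF that]]])
      ultimately show "\<exists>G. smooth_on U G \<and> (\<forall>y\<in>V. G' (g y) (inv (sderiv \<Omega> \<Psi> (g y)) v) = G (g y))"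
        by blast
    qed
  qed
  then show ?thesis using that U V hom gd by blast
qed


lemma implicit_function:
  fixes \<Phi> :: "'a::euclidean_space \<times> 'b::euclidean_space \<Rightarrow> 'b"
  assumes sm: "smooth_on \<Omega> \<Phi>" and p0: "(x0, y0) \<in> \<Omega>" and z: "\<Phi> (x0, y0) = 0"
    and bA: "bij (\<lambda>u. sderiv \<Omega> \<Phi> (x0, y0) (0, u))"
  obtains X y where "open X" "x0 \<in> X" "y x0 = y0" "\<And>x. x \<in> X \<Longrightarrow> (x, y x) \<in> \<Omega>"
    "\<And>x. x \<in> X \<Longrightarrow> \<Phi> (x, y x) = 0" "smooth_on X y"
    "(y has_derivative (\<lambda>v. - inv (\<lambda>u. sderiv \<Omega> \<Phi> (x0, y0) (0, u)) (sderiv \<Omega> \<Phi> (x0, y0) (v, 0)))) (at x0)"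
proof -
  have oO: "open \<Omega>" using smooth_on_open[OF sm] .
  define \<Psi> where "\<Psi> p = (fst p, \<Phi> p)" for p
  have smP: "smooth_on \<Omega> \<Psi>" unfolding \<Psi>_def by (rule smooth_on_Pair[OF smooth_on_fst[OF oO] sm])
  define P' where "P' p h = (fst h, sderiv \<Omega> \<Phi> p h)" for p h
  have Pd: "(\<Psi> has_derivative P' p) (at p)" if "p \<in> \<Omega>" for p
    unfolding \<Psi>_def P'_def by (intro has_derivative_Pair has_derivative_fst has_derivative_ident sderiv(1)[OF sm that])
  have sdP: "sderiv \<Omega> \<Psi> p = P' p" if "p \<in> \<Omega>" for p by (rule sderiv_unique[OF smP that Pd[OF that]])
  define A where "A = (\<lambda>u. sderiv \<Omega> \<Phi> (x0, y0) (0, u))"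
  define D where "D = sderiv \<Omega> \<Phi> (x0, y0)"
  have Dlin: "linear D" unfolding D_def using sderiv(1)[OF sm p0] has_derivative_linear by blast
  have Dsplit: "D (a, b) = D (a, 0) + A b" for a b
    unfolding A_def D_def[symmetric] using linear_add[OF Dlin, of "(a,0)" "(0,b)"] by simp
  have linP: "linear (P' (x0, y0))" using Pd[OF p0] has_derivative_linear by blast
  have injP: "inj (P' (x0, y0))"
  proof (subst linear_injective_0[OF linP], intro allI impI)
    fix h :: "'a \<times> 'b" assume h: "P' (x0, y0) h = 0"
    then have a: "fst h = 0" unfolding P'_def by (simp add: prod_eq_iff)
    have Dh: "D h = 0" using h unfolding P'_def D_def by (simp add: prod_eq_iff)
    have "h = (0, snd h)" using a by (simp add: prod_eq_iff)
    then have "D (0, snd h) = 0" using Dh by metis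
    then have "A (snd h) = 0" unfolding A_def D_def .
    moreover have "A 0 = 0" unfolding A_def D_def[symmetric] using linear_0[OF Dlin] by (simp add: zero_prod_def)
    ultimately have "snd h = 0" using bA unfolding A_def[symmetric] by (metis bij_is_inj injD)
    with a show "h = 0" by (simp add: prod_eq_iff)
  qed
  have bijP: "bij (sderiv \<Omega> \<Psi> (x0, y0))"
    using injP linear_injective_imp_surjective[OF linP injP] sdP[OF p0] by (simp add: bij_def)
  obtain U V g where U: "open U" "U \<subseteq> \<Omega>" "(x0, y0) \<in> U" and V: "open V" "\<Psi> (x0, y0) \<in> V"
    and hom: "homeomorphism U V \<Psi> g"
    and gd: "\<And>q. q \<in> V \<Longrightarrow> (g has_derivative inv (sderiv \<Omega> \<Psi> (g q))) (at q)"
    and gsm: "smooth_on V g"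
    using smooth_local_inverse[OF smP p0 bijP] by metis
  have Psi0: "\<Psi> (x0, y0) = (x0, 0)" unfolding \<Psi>_def using z by simp
  have g0: "g (x0, 0) = (x0, y0)" using hom U(3) Psi0 unfolding homeomorphism_def by metis
  define X where "X = (\<lambda>x. (x, 0::'b)) -` V"
  have oX: "open X" unfolding X_def by (rule open_vimage[OF V(1)]) (intro continuous_intros)
  have x0X: "x0 \<in> X" unfolding X_def using V(2) Psi0 by simp
  define y where "y x = snd (g (x, 0))" for x
  have gx: "g (x, 0) = (x, y x)" and Phx: "\<Phi> (x, y x) = 0" and inU: "(x, y x) \<in> U" if "x \<in> X" for x
  proof -
    have xV: "(x, 0) \<in> V" using that unfolding X_def by simp
    have gU: "g (x, 0) \<in> U" and Pg: "\<Psi> (g (x, 0)) = (x, 0)"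
      using hom xV unfolding homeomorphism_def by auto
    show gx: "g (x, 0) = (x, y x)" using Pg unfolding \<Psi>_def y_def by (simp add: prod_eq_iff)
    show "\<Phi> (x, y x) = 0" using Pg unfolding \<Psi>_def gx by simp
    show "(x, y x) \<in> U" using gU gx by simp
  qed
  have smy: "smooth_on X y"
  proof -
    have "smooth_on X (\<lambda>x. (x, 0::'b))" by (rule smooth_on_Pair[OF smooth_on_id[OF oX] smooth_on_const[OF oX]])
    then have "smooth_on X (\<lambda>x. g (x, 0))" by (rule smooth_on_compose[OF _ gsm]) (simp add: X_def)
    then show ?thesis unfolding y_def by (rule smooth_on_linear_comp[OF _ bounded_linear_snd])
  qed
  have gd0: "(g has_derivative inv (P' (x0, y0))) (at (x0, 0))"
    using gd[OF V(2)[unfolded Psi0]] g0 sdP[OF p0] by simp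
  have "(y has_derivative (\<lambda>v. snd (inv (P' (x0, y0)) (v, 0)))) (at x0)"
    unfolding y_def
    using has_derivative_compose[OF has_derivative_Pair[OF has_derivative_ident has_derivative_const] gd0]
    by (intro has_derivative_snd) (simp add: o_def)
  moreover have "snd (inv (P' (x0, y0)) (v, 0)) = - inv A (D (v, 0))" for v
  proof -
    define c where "c = - inv A (D (v, 0))"
    have linA: "linear A" unfolding A_def D_def[symmetric]
      using Dlin by (auto simp: linear_iff linear_add[OF Dlin, symmetric] linear_scale[OF Dlin, symmetric])
    have "A c = - D (v, 0)" unfolding c_def using linA bA unfolding A_def[symmetric]
      by (simp add: linear_neg bij_is_surj surj_f_inv_f)
    then have "P' (x0, y0) (v, c) = (v, 0)" unfolding P'_def D_def[symmetric] using Dsplit[of v c] by simp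
    then have "inv (P' (x0, y0)) (v, 0) = (v, c)" using injP by (metis inv_f_f)
    then show ?thesis unfolding c_def by simp
  qed
  ultimately have "(y has_derivative (\<lambda>v. - inv A (D (v, 0)))) (at x0)" by simp
  moreover have "y x0 = y0" using g0 unfolding y_def by simp
  ultimately show ?thesis
    using that[OF oX x0X _ _ _ smy] Phx inU U(2) unfolding A_def D_def by blast
qed


lemma mm_bilinear: "bounded_bilinear (\<lambda>(U::real^'k^'m) (V::real^'k^'n). U ** transpose V)"
proof -
  have "bilinear (\<lambda>(U::real^'k^'m) (V::real^'k^'n). U ** transpose V)"
    unfolding bilinear_def
    by (auto simp: linear_iff matrix_matrix_mult_def transpose_def vec_eq_iff sum.distrib sum_distrib_left algebra_simps)
  then show ?thesis by (simp add: bilinear_conv_bounded_bilinear)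
qed

lemma factF_smooth:
  fixes f :: "real^'n^'m \<Rightarrow> real"
  assumes "smooth_on UNIV f"
  shows "smooth_on UNIV (factF f :: (real^'k^'m) \<times> (real^'k^'n) \<Rightarrow> real)"
proof -
  have "smooth_on UNIV (\<lambda>p::(real^'k^'m) \<times> (real^'k^'n). fst p ** transpose (snd p))"
    using smooth_on_bilinear[OF mm_bilinear smooth_on_fst[OF open_UNIV] smooth_on_snd[OF open_UNIV]] by simp
  then have "smooth_on UNIV (\<lambda>p::(real^'k^'m) \<times> (real^'k^'n). f (fst p ** transpose (snd p)))"
    by (rule smooth_on_compose[OF _ assms]) simp
  then show ?thesis unfolding factF_def[abs_def] .
qed

lemma mm_row: "((u::real^'k^'m) ** transpose (V::real^'k^'n)) $ i = V *v (u $ i)"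
  by (simp add: vec_eq_iff matrix_matrix_mult_def matrix_vector_mult_def transpose_def mult.commute)

lemma mm_inj_left:
  fixes u :: "real^'k^'m" and V :: "real^'k^'n"
  assumes "inj ((*v) V)" "u ** transpose V = 0"
  shows "u = 0"
proof -
  have "V *v (u $ i) = 0" for i using assms(2) mm_row[of u V i] by simp
  then have "u $ i = 0" for i
    using assms(1) by (metis injD matrix_vector_mult_0_right)
  then show ?thesis by (simp add: vec_eq_iff)
qed

lemma mm_inj_right:
  fixes U :: "real^'k^'m" and v :: "real^'k^'n"
  assumes "inj ((*v) U)" "U ** transpose v = 0"
  shows "v = 0"
proof -
  have "v ** transpose U = transpose (U ** transpose v)" by (simp add: matrix_transpose_mul)
  also have "\<dots> = 0" using assms(2) by (simp add: transpose_def vec_eq_iff)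
  finally have "v ** transpose U = 0" .
  then show ?thesis by (rule mm_inj_left[OF assms(1)])
qed

lemma inj_open:
  fixes A :: "real^'k^'n"
  assumes "inj ((*v) A)"
  obtains e where "e > 0" "\<And>B. dist B A < e \<Longrightarrow> inj ((*v) B)"
proof -
  obtain c where c: "c > 0" "\<And>x. c * norm x \<le> norm (A *v x)"
    using linear_inj_bounded_below_pos[OF matrix_vector_mul_linear assms] by blast
  define K where "K = real CARD('n) * real CARD('k)"
  have K: "K > 0" unfolding K_def by simp
  show ?thesis
  proof (rule that[of "c / K"])
    show "c / K > 0" using c K by simp
    fix B :: "real^'k^'n" assume d: "dist B A < c / K"
    have comp: "\<bar>(B - A) $ i $ j\<bar> \<le> norm (B - A)" for i j
    proof -
      have "\<bar>(B - A) $ i $ j\<bar> \<le> norm ((B - A) $ i)" by (rule component_le_norm_cart)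
      also have "\<dots> \<le> norm (B - A)" by (rule Finite_Cartesian_Product.norm_nth_le)
      finally show ?thesis .
    qed
    have on: "onorm ((*v) (B - A)) \<le> K * norm (B - A)"
      using onorm_le_matrix_component[OF comp] unfolding K_def by simp
    have "B *v x \<noteq> 0" if "x \<noteq> 0" for x
    proof
      assume Bx: "B *v x = 0"
      have "norm ((B - A) *v x) \<le> onorm ((*v) (B - A)) * norm x"
        by (rule onorm[OF matrix_vector_mul_bounded_linear])
      also have "\<dots> \<le> K * norm (B - A) * norm x" using on by (simp add: mult_right_mono)
      also have "\<dots> < c * norm x"
      proof (rule mult_strict_right_mono)
        show "K * norm (B - A) < c" using d K by (simp add: dist_norm less_divide_eq mult.commute)
        show "0 < norm x" using that by simp
      qed
      also have "\<dots> \<le> norm (A *v x)" by (rule c(2))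
      also have "\<dots> = norm ((B - A) *v x)" using Bx by (simp add: matrix_vector_mult_diff_rdistrib)
      finally show False by simp
    qed
    then show "inj ((*v) B)"
      using linear_injective_0[OF matrix_vector_mul_linear] by blast
  qed
qed


lemma sc_first_order:
  fixes \<phi> :: "real \<Rightarrow> real"
  assumes sc: "\<And>a b l. 0 \<le> l \<Longrightarrow> l \<le> 1 \<Longrightarrow> \<phi> (l * a + (1 - l) * b) \<le> l * \<phi> a + (1 - l) * \<phi> b - \<kappa> / 2 * l * (1 - l) * (a - b)\<^sup>2"
    and d: "(\<phi> has_real_derivative d) (at s)"
  shows "\<phi> t \<ge> \<phi> s + d * (t - s) + \<kappa> / 2 * (t - s)\<^sup>2"
proof -
  define g where "g l = \<phi> (s + l * (t - s))" for l
  have gd: "(g has_real_derivative d * (t - s)) (at 0)"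
  proof -
    have "((\<lambda>l. s + l * (t - s)) has_real_derivative (t - s)) (at 0)"
      by (auto intro!: derivative_eq_intros)
    from DERIV_chain2[OF _ this, of \<phi> d] d show ?thesis unfolding g_def by simp
  qed
  then have "((\<lambda>l. (g l - g 0) / (l - 0)) \<longlongrightarrow> d * (t - s)) (at 0)"
    using has_field_derivative_iff by blast
  then have lim1: "((\<lambda>l. (g l - g 0) / l) \<longlongrightarrow> d * (t - s)) (at_right 0)"
    by (simp add: filterlim_at_split)
  have lim2: "((\<lambda>l. \<phi> t - \<phi> s - \<kappa> / 2 * (1 - l) * (t - s)\<^sup>2) \<longlongrightarrow> \<phi> t - \<phi> s - \<kappa> / 2 * (1 - 0) * (t - s)\<^sup>2) (at_right 0)"
    by (intro tendsto_intros)
  have ev: "\<forall>\<^sub>F l in at_right 0. (g l - g 0) / l \<le> \<phi> t - \<phi> s - \<kappa> / 2 * (1 - l) * (t - s)\<^sup>2"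
  proof -
    have "\<forall>\<^sub>F l in at_right (0::real). l < 1"
      using eventually_at_right_real[of 0 1] by (rule eventually_mono) auto
    moreover have "\<forall>\<^sub>F l in at_right (0::real). 0 < l"
      by (simp add: eventually_at_right_less)
    ultimately show ?thesis
    proof eventually_elim
      case (elim l)
      have "g l = \<phi> (l * t + (1 - l) * s)" unfolding g_def by (simp add: algebra_simps)
      also have "\<dots> \<le> l * \<phi> t + (1 - l) * \<phi> s - \<kappa> / 2 * l * (1 - l) * (t - s)\<^sup>2"
        using sc[of l t s] elim by simp
      finally have "g l - g 0 \<le> l * (\<phi> t - \<phi> s - \<kappa> / 2 * (1 - l) * (t - s)\<^sup>2)"
        unfolding g_def by (simp add: algebra_simps)
      then show ?case using elim by (simp add: divide_le_eq mult.commute)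
    qed
  qed
  have "d * (t - s) \<le> \<phi> t - \<phi> s - \<kappa> / 2 * (1 - 0) * (t - s)\<^sup>2"
    by (rule tendsto_le[OF trivial_limit_at_right_real lim2 lim1 ev])
  then show ?thesis by simp
qed

lemma sc_second_order:
  fixes \<phi> \<phi>' :: "real \<Rightarrow> real"
  assumes sc: "\<And>a b l. 0 \<le> l \<Longrightarrow> l \<le> 1 \<Longrightarrow> \<phi> (l * a + (1 - l) * b) \<le> l * \<phi> a + (1 - l) * \<phi> b - \<kappa> / 2 * l * (1 - l) * (a - b)\<^sup>2"
    and d: "\<And>t. (\<phi> has_real_derivative \<phi>' t) (at t)"
    and d2: "(\<phi>' has_real_derivative q) (at 0)"
  shows "\<kappa> \<le> q"
proof -
  have "((\<lambda>t. (\<phi>' t - \<phi>' 0) / (t - 0)) \<longlongrightarrow> q) (at 0)"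
    using d2 has_field_derivative_iff by blast
  then have lim: "((\<lambda>t. (\<phi>' t - \<phi>' 0) / t) \<longlongrightarrow> q) (at_right 0)"
    by (simp add: filterlim_at_split)
  have ev: "\<forall>\<^sub>F t in at_right 0. \<kappa> \<le> (\<phi>' t - \<phi>' 0) / t"
  proof -
    have "\<forall>\<^sub>F t in at_right (0::real). 0 < t"
      by (simp add: eventually_at_right_less)
    then show ?thesis
    proof eventually_elim
      case (elim t)
      have 1: "\<phi> t \<ge> \<phi> 0 + \<phi>' 0 * (t - 0) + \<kappa> / 2 * (t - 0)\<^sup>2" by (rule sc_first_order[OF sc d])
      have 2: "\<phi> 0 \<ge> \<phi> t + \<phi>' t * (0 - t) + \<kappa> / 2 * (0 - t)\<^sup>2" by (rule sc_first_order[OF sc d])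
      from 1 2 have "\<kappa> * t\<^sup>2 \<le> (\<phi>' t - \<phi>' 0) * t" by (simp add: algebra_simps power2_eq_square)
      then show ?case using elim by (simp add: le_divide_eq power2_eq_square mult.assoc)
    qed
  qed
  show ?thesis by (rule tendsto_le[OF trivial_limit_at_right_real lim tendsto_const ev])
qed

lemma grad_smooth:
  fixes G :: "'a::euclidean_space \<Rightarrow> real"
  assumes sm: "smooth_on UNIV G"
  shows "grad G p = (\<Sum>b\<in>Basis. sderiv UNIV G p b *\<^sub>R b)"
    and "(G has_derivative (\<lambda>h. grad G p \<bullet> h)) (at p)"
proof -
  define g where "g = (\<Sum>b\<in>Basis. sderiv UNIV G p b *\<^sub>R b)"
  have lin: "linear (sderiv UNIV G p)" using sderiv(1)[OF sm] has_derivative_linear by blast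
  have e: "sderiv UNIV G p h = g \<bullet> h" for h
  proof -
    have "sderiv UNIV G p h = (\<Sum>b\<in>Basis. (h \<bullet> b) *\<^sub>R sderiv UNIV G p b)"
      by (rule linear_basis_expand[OF lin])
    also have "\<dots> = g \<bullet> h" unfolding g_def by (simp add: inner_sum_right inner_commute mult.commute)
    finally show ?thesis .
  qed
  have gd: "(G has_derivative (\<lambda>h. g \<bullet> h)) (at p)"
  proof -
    have "sderiv UNIV G p = (\<lambda>h. g \<bullet> h)" using e by (intro ext)
    then show ?thesis using sderiv(1)[OF sm, of p] by simp
  qed
  have uniq: "g' = g" if "(G has_derivative (\<lambda>h. g' \<bullet> h)) (at p)" for g'
  proof -
    have "(\<lambda>h. g' \<bullet> h) = (\<lambda>h. g \<bullet> h)" by (rule has_derivative_unique[OF that gd])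
    then have "(g' - g) \<bullet> (g' - g) = 0" by (metis inner_diff_left diff_self)
    then show ?thesis by simp
  qed
  have "grad G p = g" unfolding grad_def
    by (rule the_equality[where P="\<lambda>g. (G has_derivative (\<lambda>h. g \<bullet> h)) (at p)", OF gd uniq])
  then show "grad G p = (\<Sum>b\<in>Basis. sderiv UNIV G p b *\<^sub>R b)" "(G has_derivative (\<lambda>h. grad G p \<bullet> h)) (at p)"
    using gd unfolding g_def by auto
qed

lemma grad_smooth_on:
  fixes G :: "'a::euclidean_space \<Rightarrow> real"
  assumes sm: "smooth_on UNIV G"
  shows "smooth_on UNIV (grad G)"
proof -
  have "smooth_on UNIV (\<lambda>p. \<Sum>b\<in>Basis. sderiv UNIV G p b *\<^sub>R b)"
    by (rule smooth_on_sum[OF open_UNIV], rule smooth_on_scaleR_const2, rule sderiv(2)[OF sm])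
  then show ?thesis by (rule smooth_on_cong) (simp add: grad_smooth(1)[OF sm])
qed

lemma grad_has_derivative:
  fixes G :: "'a::euclidean_space \<Rightarrow> real"
  assumes sm: "smooth_on UNIV G"
  shows "(grad G has_derivative hess G p) (at p)"
  unfolding hess_def
  using frechet_derivative_works smooth_on_differentiable[OF grad_smooth_on[OF sm], of p] by blast

lemma hess_linear:
  fixes G :: "'a::euclidean_space \<Rightarrow> real"
  assumes sm: "smooth_on UNIV G"
  shows "linear (hess G p)"
  using grad_has_derivative[OF sm] has_derivative_linear by blast

lemma line_derivs:
  fixes G :: "'a::euclidean_space \<Rightarrow> real"
  assumes sm: "smooth_on UNIV G"
  shows "((\<lambda>t. G (p + t *\<^sub>R x)) has_real_derivative (grad G (p + t *\<^sub>R x) \<bullet> x)) (at t)"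
    and "((\<lambda>t. grad G (p + t *\<^sub>R x) \<bullet> x) has_real_derivative (hess G p x \<bullet> x)) (at 0)"
proof -
  have l: "((\<lambda>t. p + t *\<^sub>R x) has_derivative (\<lambda>h. h *\<^sub>R x)) (at t)" for t :: real
    by (auto intro!: derivative_eq_intros)
  have "((\<lambda>t. G (p + t *\<^sub>R x)) has_derivative (\<lambda>h. grad G (p + t *\<^sub>R x) \<bullet> (h *\<^sub>R x))) (at t)"
    using has_derivative_compose[OF l grad_smooth(2)[OF sm]] by (simp add: o_def)
  then show "((\<lambda>t. G (p + t *\<^sub>R x)) has_real_derivative (grad G (p + t *\<^sub>R x) \<bullet> x)) (at t)"
    unfolding has_field_derivative_def by (simp add: mult_commute_abs)
  have "((\<lambda>t. grad G (p + t *\<^sub>R x)) has_derivative (\<lambda>h. hess G (p + 0 *\<^sub>R x) (h *\<^sub>R x))) (at 0)"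
    using has_derivative_compose[OF l[of 0] grad_has_derivative[OF sm, of "p + 0 *\<^sub>R x"]] by (simp add: o_def)
  then have "((\<lambda>t. grad G (p + t *\<^sub>R x) \<bullet> x) has_derivative (\<lambda>h. hess G p (h *\<^sub>R x) \<bullet> x)) (at 0)"
    by (intro has_derivative_inner_left) simp
  moreover have "hess G p (h *\<^sub>R x) \<bullet> x = (hess G p x \<bullet> x) * h" for h
    using linear_scale[OF hess_linear[OF sm]] by simp
  ultimately show "((\<lambda>t. grad G (p + t *\<^sub>R x) \<bullet> x) has_real_derivative (hess G p x \<bullet> x)) (at 0)"
    unfolding has_field_derivative_def by (simp add: mult_commute_abs)
qed


lemma factF_line_U:
  "factF f ((U, V) + t *\<^sub>R (u, 0)) = f (U ** transpose V + t *\<^sub>R (u ** transpose V))"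
  unfolding factF_def
  using bounded_bilinear.add_left[OF mm_bilinear, of U "t *\<^sub>R u" V]
        bounded_bilinear.scaleR_left[OF mm_bilinear, of t u V]
  by simp

lemma factF_line_V:
  "factF f ((U, V) + t *\<^sub>R (0, v)) = f (U ** transpose V + t *\<^sub>R (U ** transpose v))"
  unfolding factF_def
  using bounded_bilinear.add_right[OF mm_bilinear, of U V "t *\<^sub>R v"]
        bounded_bilinear.scaleR_right[OF mm_bilinear, of U t v]
  by (simp add: transpose_scalar)

lemma sc_line:
  fixes f :: "'a::real_inner \<Rightarrow> real"
  assumes sc: "\<forall>x y. \<forall>t::real. 0 \<le> t \<and> t \<le> 1 \<longrightarrow>
      f (t *\<^sub>R x + (1 - t) *\<^sub>R y) \<le> t * f x + (1 - t) * f y - \<mu> / 2 * t * (1 - t) * (norm (x - y))\<^sup>2"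
    and l: "0 \<le> l" "l \<le> 1"
  shows "f (A + (l * a + (1 - l) * b) *\<^sub>R W) \<le> l * f (A + a *\<^sub>R W) + (1 - l) * f (A + b *\<^sub>R W)
           - (\<mu> * (norm W)\<^sup>2) / 2 * l * (1 - l) * (a - b)\<^sup>2"
proof -
  have e1: "l *\<^sub>R (A + a *\<^sub>R W) + (1 - l) *\<^sub>R (A + b *\<^sub>R W) = A + (l * a + (1 - l) * b) *\<^sub>R W"
    by (simp add: algebra_simps)
  have e2: "(norm ((A + a *\<^sub>R W) - (A + b *\<^sub>R W)))\<^sup>2 = (a - b)\<^sup>2 * (norm W)\<^sup>2"
  proof -
    have "(A + a *\<^sub>R W) - (A + b *\<^sub>R W) = (a - b) *\<^sub>R W" by (simp add: algebra_simps)
    then show ?thesis by (simp add: power_mult_distrib)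
  qed
  from sc[rule_format, of l "A + a *\<^sub>R W" "A + b *\<^sub>R W"] l
  show ?thesis unfolding e1 e2 by (simp add: algebra_simps)
qed


lemma hess_lower_U:
  fixes f :: "real^'n^'m \<Rightarrow> real" and U :: "real^'k^'m" and V :: "real^'k^'n"
  assumes sm: "smooth_on UNIV f" and sc: "\<forall>x y. \<forall>t::real. 0 \<le> t \<and> t \<le> 1 \<longrightarrow>
      f (t *\<^sub>R x + (1 - t) *\<^sub>R y) \<le> t * f x + (1 - t) * f y - \<mu> / 2 * t * (1 - t) * (norm (x - y))\<^sup>2"
  shows "\<mu> * (norm (u ** transpose V))\<^sup>2 \<le> hess (factF f) (U, V) (u, 0) \<bullet> (u, 0)"
proof -
  define F where "F = (factF f :: (real^'k^'m) \<times> (real^'k^'n) \<Rightarrow> real)"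
  have smF: "smooth_on UNIV F" unfolding F_def by (rule factF_smooth[OF sm])
  define \<phi> where "\<phi> = (\<lambda>t. F ((U, V) + t *\<^sub>R (u, 0)))"
  have \<phi>: "\<phi> t = f (U ** transpose V + t *\<^sub>R (u ** transpose V))" for t
    unfolding \<phi>_def F_def by (rule factF_line_U)
  have scp: "\<phi> (l * a + (1 - l) * b) \<le> l * \<phi> a + (1 - l) * \<phi> b - (\<mu> * (norm (u ** transpose V))\<^sup>2) / 2 * l * (1 - l) * (a - b)\<^sup>2"
    if "0 \<le> l" "l \<le> 1" for a b l
    unfolding \<phi> by (rule sc_line[OF sc that])
  show ?thesis
    using sc_second_order[OF scp line_derivs(1)[OF smF, where p="(U, V)" and x="(u, 0)", folded \<phi>_def] line_derivs(2)[OF smF]]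
    unfolding F_def by simp
qed

lemma hess_lower_V:
  fixes f :: "real^'n^'m \<Rightarrow> real" and U :: "real^'k^'m" and V :: "real^'k^'n"
  assumes sm: "smooth_on UNIV f" and sc: "\<forall>x y. \<forall>t::real. 0 \<le> t \<and> t \<le> 1 \<longrightarrow>
      f (t *\<^sub>R x + (1 - t) *\<^sub>R y) \<le> t * f x + (1 - t) * f y - \<mu> / 2 * t * (1 - t) * (norm (x - y))\<^sup>2"
  shows "\<mu> * (norm (U ** transpose v))\<^sup>2 \<le> hess (factF f) (U, V) (0, v) \<bullet> (0, v)"
proof -
  define F where "F = (factF f :: (real^'k^'m) \<times> (real^'k^'n) \<Rightarrow> real)"
  have smF: "smooth_on UNIV F" unfolding F_def by (rule factF_smooth[OF sm])
  define \<phi> where "\<phi> = (\<lambda>t. F ((U, V) + t *\<^sub>R (0, v)))"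
  have \<phi>: "\<phi> t = f (U ** transpose V + t *\<^sub>R (U ** transpose v))" for t
    unfolding \<phi>_def F_def by (rule factF_line_V)
  have scp: "\<phi> (l * a + (1 - l) * b) \<le> l * \<phi> a + (1 - l) * \<phi> b - (\<mu> * (norm (U ** transpose v))\<^sup>2) / 2 * l * (1 - l) * (a - b)\<^sup>2"
    if "0 \<le> l" "l \<le> 1" for a b l
    unfolding \<phi> by (rule sc_line[OF sc that])
  show ?thesis
    using sc_second_order[OF scp line_derivs(1)[OF smF, where p="(U, V)" and x="(0, v)", folded \<phi>_def] line_derivs(2)[OF smF]]
    unfolding F_def by simp
qed

lemma S1hat_eq:
  fixes f :: "real^'n^'m \<Rightarrow> real" and U :: "real^'k^'m" and V :: "real^'k^'n"
  assumes sm: "smooth_on UNIV f" and sc: "\<forall>x y. \<forall>t::real. 0 \<le> t \<and> t \<le> 1 \<longrightarrow>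
      f (t *\<^sub>R x + (1 - t) *\<^sub>R y) \<le> t * f x + (1 - t) * f y - \<mu> / 2 * t * (1 - t) * (norm (x - y))\<^sup>2"
    and mu: "\<mu> > 0" and inj: "inj ((*v) V)" and crit: "fst (grad (factF f) (U, V)) = 0"
  shows "S1hat f V = U"
proof -
  define F where "F = (factF f :: (real^'k^'m) \<times> (real^'k^'n) \<Rightarrow> real)"
  have smF: "smooth_on UNIV F" unfolding F_def by (rule factF_smooth[OF sm])
  have key: "F (U, V) + \<mu> / 2 * (norm ((U' - U) ** transpose V))\<^sup>2 \<le> F (U', V)" for U'
  proof -
    define \<phi> where "\<phi> = (\<lambda>t. F ((U, V) + t *\<^sub>R (U' - U, 0)))"
    have \<phi>: "\<phi> t = f (U ** transpose V + t *\<^sub>R ((U' - U) ** transpose V))" for t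
      unfolding \<phi>_def F_def by (rule factF_line_U)
    have scp: "\<phi> (l * a + (1 - l) * b) \<le> l * \<phi> a + (1 - l) * \<phi> b - (\<mu> * (norm ((U' - U) ** transpose V))\<^sup>2) / 2 * l * (1 - l) * (a - b)\<^sup>2"
      if "0 \<le> l" "l \<le> 1" for a b l
      unfolding \<phi> by (rule sc_line[OF sc that])
    have d0: "(\<phi> has_real_derivative 0) (at 0)"
    proof -
      have "grad F ((U, V) + 0 *\<^sub>R (U' - U, 0)) \<bullet> (U' - U, 0) = 0"
        using crit unfolding F_def by (simp add: inner_prod_def)
      then show ?thesis using line_derivs(1)[OF smF, of "(U, V)" "(U' - U, 0)" 0] unfolding \<phi>_def by simp
    qed
    have "\<phi> 1 \<ge> \<phi> 0 + 0 * (1 - 0) + (\<mu> * (norm ((U' - U) ** transpose V))\<^sup>2) / 2 * (1 - 0)\<^sup>2"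
      by (rule sc_first_order[OF scp d0])
    then show ?thesis unfolding \<phi>_def by simp
  qed
  have min: "\<forall>U'. F (U, V) \<le> F (U', V)"
    using key mu by (smt (verit) zero_le_power2 mult_nonneg_nonneg divide_nonneg_pos)
  have uniq: "U' = U" if "\<forall>U''. F (U', V) \<le> F (U'', V)" for U'
  proof -
    have "F (U', V) \<le> F (U, V)" using that by blast
    with key[of U'] have "\<mu> / 2 * (norm ((U' - U) ** transpose V))\<^sup>2 \<le> 0" by simp
    then have "(norm ((U' - U) ** transpose V))\<^sup>2 \<le> 0" using mu by (simp add: mult_le_0_iff)
    then have "(U' - U) ** transpose V = 0" by simp
    then show ?thesis using mm_inj_left[OF inj] by force
  qed
  show ?thesis unfolding S1hat_def
    using the_equality[where P="\<lambda>U. \<forall>U'. factF f (U, V) \<le> factF f (U', V)", OF min[unfolded F_def] uniq[unfolded F_def]]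
    by blast
qed

lemma S2hat_eq:
  fixes f :: "real^'n^'m \<Rightarrow> real" and U :: "real^'k^'m" and V :: "real^'k^'n"
  assumes sm: "smooth_on UNIV f" and sc: "\<forall>x y. \<forall>t::real. 0 \<le> t \<and> t \<le> 1 \<longrightarrow>
      f (t *\<^sub>R x + (1 - t) *\<^sub>R y) \<le> t * f x + (1 - t) * f y - \<mu> / 2 * t * (1 - t) * (norm (x - y))\<^sup>2"
    and mu: "\<mu> > 0" and inj: "inj ((*v) U)" and crit: "snd (grad (factF f) (U, V)) = 0"
  shows "S2hat f U = V"
proof -
  define F where "F = (factF f :: (real^'k^'m) \<times> (real^'k^'n) \<Rightarrow> real)"
  have smF: "smooth_on UNIV F" unfolding F_def by (rule factF_smooth[OF sm])
  have key: "F (U, V) + \<mu> / 2 * (norm (U ** transpose (V' - V)))\<^sup>2 \<le> F (U, V')" for V'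
  proof -
    define \<phi> where "\<phi> = (\<lambda>t. F ((U, V) + t *\<^sub>R (0, V' - V)))"
    have \<phi>: "\<phi> t = f (U ** transpose V + t *\<^sub>R (U ** transpose (V' - V)))" for t
      unfolding \<phi>_def F_def by (rule factF_line_V)
    have scp: "\<phi> (l * a + (1 - l) * b) \<le> l * \<phi> a + (1 - l) * \<phi> b - (\<mu> * (norm (U ** transpose (V' - V)))\<^sup>2) / 2 * l * (1 - l) * (a - b)\<^sup>2"
      if "0 \<le> l" "l \<le> 1" for a b l
      unfolding \<phi> by (rule sc_line[OF sc that])
    have d0: "(\<phi> has_real_derivative 0) (at 0)"
    proof -
      have "grad F ((U, V) + 0 *\<^sub>R (0, V' - V)) \<bullet> (0, V' - V) = 0"
        using crit unfolding F_def by (simp add: inner_prod_def)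
      then show ?thesis using line_derivs(1)[OF smF, of "(U, V)" "(0, V' - V)" 0] unfolding \<phi>_def by simp
    qed
    have "\<phi> 1 \<ge> \<phi> 0 + 0 * (1 - 0) + (\<mu> * (norm (U ** transpose (V' - V)))\<^sup>2) / 2 * (1 - 0)\<^sup>2"
      by (rule sc_first_order[OF scp d0])
    then show ?thesis unfolding \<phi>_def by simp
  qed
  have min: "\<forall>V'. F (U, V) \<le> F (U, V')"
    using key mu by (smt (verit) zero_le_power2 mult_nonneg_nonneg divide_nonneg_pos)
  have uniq: "V' = V" if "\<forall>V''. F (U, V') \<le> F (U, V'')" for V'
  proof -
    have "F (U, V') \<le> F (U, V)" using that by blast
    with key[of V'] have "\<mu> / 2 * (norm (U ** transpose (V' - V)))\<^sup>2 \<le> 0" by simp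
    then have "(norm (U ** transpose (V' - V)))\<^sup>2 \<le> 0" using mu by (simp add: mult_le_0_iff)
    then have "U ** transpose (V' - V) = 0" by simp
    then show ?thesis using mm_inj_right[OF inj] by force
  qed
  show ?thesis unfolding S2hat_def
    using the_equality[where P="\<lambda>V. \<forall>V'. factF f (U, V) \<le> factF f (U, V')", OF min[unfolded F_def] uniq[unfolded F_def]]
    by blast
qed


theorem mainTheorem3:
  fixes f :: "real^'n^'m \<Rightarrow> real"
    and Us :: "real^'k^'m" and Vs :: "real^'k^'n"
    and \<omega> :: real
  defines "F \<equiv> (factF f :: (real^'k^'m) \<times> (real^'k^'n) \<Rightarrow> real)"
  defines "H \<equiv> hess F (Us, Vs)"
  defines "D \<equiv> blockD H" and "E \<equiv> blockE H" and "Et \<equiv> blockEt H"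
  defines "N \<equiv> (\<lambda>x. (1 / \<omega>) *\<^sub>R D x + E x)"
  defines "L \<equiv> (\<lambda>x. - (inv D (E x)))" and "R \<equiv> (\<lambda>x. - (inv D (Et x)))"
  assumes smooth: "smooth_on UNIV f"
    and sconv: "strongly_convex f"
    and crit: "(F has_derivative (\<lambda>_. 0)) (at (Us, Vs))"
    and rankU: "rank Us = CARD('k)" and rankV: "rank Vs = CARD('k)"
    and omega: "\<omega> \<noteq> 0"
  shows "(\<forall>x. x \<noteq> 0 \<longrightarrow> x \<bullet> D x > 0)
    \<and> (\<exists>W. open W \<and> (Us, Vs) \<in> W \<and> smooth_on W (Somega f \<omega>))
    \<and> (Somega f \<omega> has_derivative (\<lambda>x. x - inv N (H x))) (at (Us, Vs))
    \<and> (\<forall>x. frechet_derivative (Somega f \<omega>) (at (Us, Vs)) x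
            = inv (\<lambda>y. y - \<omega> *\<^sub>R L y) ((1 - \<omega>) *\<^sub>R x + \<omega> *\<^sub>R R x))
    \<and> (S2hat f) differentiable (at Us) \<and> (S1hat f) differentiable (at Vs)
    \<and> (\<forall>u v. L (u, v) = (0, frechet_derivative (S2hat f) (at Us) u))
    \<and> (\<forall>u v. R (u, v) = (frechet_derivative (S1hat f) (at Vs) v, 0))"
proof -
  obtain \<mu> where mu: "\<mu> > 0" and sc\<mu>: "\<forall>x y. \<forall>t::real. 0 \<le> t \<and> t \<le> 1 \<longrightarrow>
      f (t *\<^sub>R x + (1 - t) *\<^sub>R y) \<le> t * f x + (1 - t) * f y - \<mu> / 2 * t * (1 - t) * (norm (x - y))\<^sup>2"
    using sconv unfolding strongly_convex_def by blast
  have smF: "smooth_on UNIV F" unfolding F_def by (rule factF_smooth[OF smooth])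
  have injU: "inj ((*v) Us)" using rankU full_rank_injective by blast
  have injV: "inj ((*v) Vs)" using rankV full_rank_injective by blast
  have Hlin: "linear H" unfolding H_def by (rule hess_linear[OF smF])
  have Hd: "(grad F has_derivative H) (at (Us, Vs))" unfolding H_def by (rule grad_has_derivative[OF smF])
  have g0: "grad F (Us, Vs) = 0"
  proof -
    have "(\<lambda>h. grad F (Us, Vs) \<bullet> h) = (\<lambda>_. 0)"
      by (rule has_derivative_unique[OF grad_smooth(2)[OF smF] crit])
    then have "grad F (Us, Vs) \<bullet> grad F (Us, Vs) = 0" by metis
    then show ?thesis by simp
  qed
  define A1 where "A1 u = fst (H (u, 0))" for u
  define A2 where "A2 v = snd (H (0, v))" for v
  define B1 where "B1 u = snd (H (u, 0))" for u
  define C1 where "C1 v = fst (H (0, v))" for v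
  have Hsplit: "H (u, v) = (A1 u + C1 v, B1 u + A2 v)" for u v
  proof -
    have "H (u, v) = H (u, 0) + H (0, v)" using linear_add[OF Hlin, of "(u, 0)" "(0, v)"] by simp
    then show ?thesis unfolding A1_def A2_def B1_def C1_def by (simp add: prod_eq_iff)
  qed
  have hUa: "H (x + y, 0) = H (x, 0) + H (y, 0)" for x y using linear_add[OF Hlin, of "(x, 0)" "(y, 0)"] by simp
  have hUs: "H (c *\<^sub>R x, 0) = c *\<^sub>R H (x, 0)" for c x using linear_scale[OF Hlin, of c "(x, 0)"] by simp
  have hVa: "H (0, x + y) = H (0, x) + H (0, y)" for x y using linear_add[OF Hlin, of "(0, x)" "(0, y)"] by simp
  have hVs: "H (0, c *\<^sub>R x) = c *\<^sub>R H (0, x)" for c x using linear_scale[OF Hlin, of c "(0, x)"] by simp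
  have linA1: "linear A1" and linA2: "linear A2" and linB1: "linear B1" and linC1: "linear C1"
    unfolding A1_def[abs_def] A2_def[abs_def] B1_def[abs_def] C1_def[abs_def]
    by (auto simp: linear_iff hUa hUs hVa hVs)
  have posU: "u \<bullet> A1 u > 0" if "u \<noteq> 0" for u
  proof -
    have "\<mu> * (norm (u ** transpose Vs))\<^sup>2 \<le> H (u, 0) \<bullet> (u, 0)"
      unfolding H_def F_def by (rule hess_lower_U[OF smooth sc\<mu>])
    also have "H (u, 0) \<bullet> (u, 0) = u \<bullet> A1 u" unfolding A1_def by (simp add: inner_prod_def inner_commute)
    finally have le: "\<mu> * (norm (u ** transpose Vs))\<^sup>2 \<le> u \<bullet> A1 u" .
    have "u ** transpose Vs \<noteq> 0" using mm_inj_left[OF injV] that by blast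
    then have "\<mu> * (norm (u ** transpose Vs))\<^sup>2 > 0" using mu by simp
    with le show ?thesis by linarith
  qed
  have posV: "v \<bullet> A2 v > 0" if "v \<noteq> 0" for v
  proof -
    have "\<mu> * (norm (Us ** transpose v))\<^sup>2 \<le> H (0, v) \<bullet> (0, v)"
      unfolding H_def F_def by (rule hess_lower_V[OF smooth sc\<mu>])
    also have "H (0, v) \<bullet> (0, v) = v \<bullet> A2 v" unfolding A2_def by (simp add: inner_prod_def inner_commute)
    finally have le: "\<mu> * (norm (Us ** transpose v))\<^sup>2 \<le> v \<bullet> A2 v" .
    have "Us ** transpose v \<noteq> 0" using mm_inj_right[OF injU] that by blast
    then have "\<mu> * (norm (Us ** transpose v))\<^sup>2 > 0" using mu by simp
    with le show ?thesis by linarith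
  qed
  have injA1: "inj A1"
    using linear_injective_0[OF linA1] posU by force
  have injA2: "inj A2"
    using linear_injective_0[OF linA2] posV by force
  have bijA1: "bij A1" using injA1 linear_injective_imp_surjective[OF linA1 injA1] by (simp add: bij_def)
  have bijA2: "bij A2" using injA2 linear_injective_imp_surjective[OF linA2 injA2] by (simp add: bij_def)
  have conj1: "\<forall>x. x \<noteq> 0 \<longrightarrow> x \<bullet> D x > 0"
  proof (intro allI impI)
    fix x :: "(real^'k^'m) \<times> (real^'k^'n)" assume x: "x \<noteq> 0"
    have e: "x \<bullet> D x = fst x \<bullet> A1 (fst x) + snd x \<bullet> A2 (snd x)"
      unfolding D_def blockD_def A1_def A2_def by (simp add: inner_prod_def)
    have "fst x \<bullet> A1 (fst x) \<ge> 0" using posU[of "fst x"] linear_0[OF linA1] by (cases "fst x = 0") auto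
    moreover have "snd x \<bullet> A2 (snd x) \<ge> 0" using posV[of "snd x"] linear_0[OF linA2] by (cases "snd x = 0") auto
    moreover have "fst x \<noteq> 0 \<or> snd x \<noteq> 0" using x by (simp add: prod_eq_iff)
    ultimately show "x \<bullet> D x > 0" unfolding e using posU posV by fastforce
  qed
  define \<Phi>1 where "\<Phi>1 = (\<lambda>q::(real^'k^'n) \<times> (real^'k^'m). fst (grad F (snd q, fst q)))"
  have sw1: "smooth_on UNIV (\<lambda>q::(real^'k^'n) \<times> (real^'k^'m). (snd q, fst q))"
    by (rule smooth_on_Pair[OF smooth_on_snd[OF open_UNIV] smooth_on_fst[OF open_UNIV]])
  have "smooth_on UNIV (\<lambda>q::(real^'k^'n) \<times> (real^'k^'m). grad F (snd q, fst q))"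
    by (rule smooth_on_compose[OF sw1 grad_smooth_on[OF smF]]) simp
  then have sm\<Phi>1: "smooth_on UNIV \<Phi>1" unfolding \<Phi>1_def by (rule smooth_on_linear_comp[OF _ bounded_linear_fst])
  have Hd1: "(grad F has_derivative H) (at ((\<lambda>q::(real^'k^'n) \<times> (real^'k^'m). (snd q, fst q)) (Vs, Us)))"
    using Hd by simp
  have "(\<Phi>1 has_derivative (\<lambda>h. fst (H (snd h, fst h)))) (at (Vs, Us))"
    unfolding \<Phi>1_def
    using has_derivative_compose[OF has_derivative_Pair[OF has_derivative_snd[OF has_derivative_ident] has_derivative_fst[OF has_derivative_ident]] Hd1]
    by (intro has_derivative_fst) (simp add: o_def)
  then have sd\<Phi>1: "sderiv UNIV \<Phi>1 (Vs, Us) = (\<lambda>h. fst (H (snd h, fst h)))"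
    by (rule sderiv_unique[OF sm\<Phi>1 UNIV_I])
  have A1eq: "(\<lambda>u. sderiv UNIV \<Phi>1 (Vs, Us) (0, u)) = A1" unfolding sd\<Phi>1 A1_def by simp
  have z1: "\<Phi>1 (Vs, Us) = 0" unfolding \<Phi>1_def using g0 by simp
  obtain X1 y1 where X1: "open X1" "Vs \<in> X1" and y1Vs: "y1 Vs = Us"
    and y1z: "\<And>V. V \<in> X1 \<Longrightarrow> \<Phi>1 (V, y1 V) = 0" and y1sm: "smooth_on X1 y1"
    and y1d0: "(y1 has_derivative (\<lambda>v. - inv A1 (sderiv UNIV \<Phi>1 (Vs, Us) (v, 0)))) (at Vs)"
    by (rule implicit_function[OF sm\<Phi>1 UNIV_I z1, unfolded A1eq, OF bijA1]) blast
  define y1d where "y1d v = - inv A1 (C1 v)" for v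
  have y1d: "(y1 has_derivative y1d) (at Vs)"
    using y1d0 unfolding sd\<Phi>1 y1d_def[abs_def] C1_def by simp
  define \<Phi>2 where "\<Phi>2 = (\<lambda>q::(real^'k^'m) \<times> (real^'k^'n). snd (grad F q))"
  have sm\<Phi>2: "smooth_on UNIV \<Phi>2" unfolding \<Phi>2_def by (rule smooth_on_linear_comp[OF grad_smooth_on[OF smF] bounded_linear_snd])
  have "(\<Phi>2 has_derivative (\<lambda>h. snd (H h))) (at (Us, Vs))"
    unfolding \<Phi>2_def using Hd by (rule has_derivative_snd)
  then have sd\<Phi>2: "sderiv UNIV \<Phi>2 (Us, Vs) = (\<lambda>h. snd (H h))"
    by (rule sderiv_unique[OF sm\<Phi>2 UNIV_I])
  have A2eq: "(\<lambda>v. sderiv UNIV \<Phi>2 (Us, Vs) (0, v)) = A2" unfolding sd\<Phi>2 A2_def by simp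
  have z2: "\<Phi>2 (Us, Vs) = 0" unfolding \<Phi>2_def using g0 by simp
  obtain X2 y2 where X2: "open X2" "Us \<in> X2" and y2Us: "y2 Us = Vs"
    and y2z: "\<And>U. U \<in> X2 \<Longrightarrow> \<Phi>2 (U, y2 U) = 0" and y2sm: "smooth_on X2 y2"
    and y2d0: "(y2 has_derivative (\<lambda>u. - inv A2 (sderiv UNIV \<Phi>2 (Us, Vs) (u, 0)))) (at Us)"
    by (rule implicit_function[OF sm\<Phi>2 UNIV_I z2, unfolded A2eq, OF bijA2]) blast
  define y2d where "y2d u = - inv A2 (B1 u)" for u
  have y2d: "(y2 has_derivative y2d) (at Us)"
    using y2d0 unfolding sd\<Phi>2 y2d_def[abs_def] B1_def by simp
  obtain e1 where e1: "e1 > 0" "\<And>B. dist B Vs < e1 \<Longrightarrow> inj ((*v) B)" using inj_open[OF injV] by blast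
  obtain e2 where e2: "e2 > 0" "\<And>B. dist B Us < e2 \<Longrightarrow> inj ((*v) B)" using inj_open[OF injU] by blast
  define X1' where "X1' = X1 \<inter> ball Vs e1"
  define X2' where "X2' = X2 \<inter> ball Us e2"
  have X1': "open X1'" "Vs \<in> X1'" "X1' \<subseteq> X1" unfolding X1'_def using X1 e1 by auto
  have X2': "open X2'" "Us \<in> X2'" "X2' \<subseteq> X2" unfolding X2'_def using X2 e2 by auto
  have S1eq: "S1hat f V = y1 V" if "V \<in> X1'" for V
  proof (rule S1hat_eq[OF smooth sc\<mu> mu])
    show "inj ((*v) V)" using that e1(2) unfolding X1'_def by (simp add: dist_commute)
    show "fst (grad (factF f) (y1 V, V)) = 0" using y1z[of V] that X1'(3) unfolding \<Phi>1_def F_def by auto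
  qed
  have S2eq: "S2hat f U = y2 U" if "U \<in> X2'" for U
  proof (rule S2hat_eq[OF smooth sc\<mu> mu])
    show "inj ((*v) U)" using that e2(2) unfolding X2'_def by (simp add: dist_commute)
    show "snd (grad (factF f) (U, y2 U)) = 0" using y2z[of U] that X2'(3) unfolding \<Phi>2_def F_def by auto
  qed
  have S1d: "(S1hat f has_derivative y1d) (at Vs)"
    by (rule has_derivative_transform_within_open[OF y1d X1'(1,2)]) (simp add: S1eq)
  have S2d: "(S2hat f has_derivative y2d) (at Us)"
    by (rule has_derivative_transform_within_open[OF y2d X2'(1,2)]) (simp add: S2eq)
  have fd1: "frechet_derivative (S1hat f) (at Vs) = y1d" using frechet_derivative_at[OF S1d] by simp
  have fd2: "frechet_derivative (S2hat f) (at Us) = y2d" using frechet_derivative_at[OF S2d] by simp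
  have Dform: "D (a, b) = (A1 a, A2 b)" for a b unfolding D_def blockD_def A1_def A2_def by simp
  have injD: "inj D"
  proof (rule injI)
    fix x y assume "D x = D y"
    then have "A1 (fst x) = A1 (fst y)" "A2 (snd x) = A2 (snd y)"
      using Dform[of "fst x" "snd x"] Dform[of "fst y" "snd y"] by simp_all
    then show "x = y" using injA1 injA2 by (simp add: inj_eq prod_eq_iff)
  qed
  have A1inv: "A1 (inv A1 w) = w" for w using bijA1 by (simp add: bij_is_surj surj_f_inv_f)
  have A2inv: "A2 (inv A2 w) = w" for w using bijA2 by (simp add: bij_is_surj surj_f_inv_f)
  have invD: "inv D (a, b) = (inv A1 a, inv A2 b)" for a b
    by (rule inv_f_eq[OF injD]) (simp add: Dform A1inv A2inv)
  have iA10: "inv A1 0 = 0" by (rule inv_f_eq[OF injA1]) (simp add: linear_0[OF linA1])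
  have iA20: "inv A2 0 = 0" by (rule inv_f_eq[OF injA2]) (simp add: linear_0[OF linA2])
  have Lform: "L (u, v) = (0, y2d u)" for u v
    unfolding L_def E_def blockE_def y2d_def B1_def by (simp add: invD iA10)
  have Rform: "R (u, v) = (y1d v, 0)" for u v
    unfolding R_def Et_def blockEt_def y1d_def C1_def by (simp add: invD iA20)
  have A1y1d: "A1 (y1d v) = - C1 v" for v unfolding y1d_def by (simp add: linear_neg[OF linA1] A1inv)
  have A2y2d: "A2 (y2d u) = - B1 u" for u unfolding y2d_def by (simp add: linear_neg[OF linA2] A2inv)
  define h where "h q = (1 - \<omega>) *\<^sub>R fst q + \<omega> *\<^sub>R y1 (snd q)" for q :: "(real^'k^'m) \<times> (real^'k^'n)"
  define T where "T = (UNIV :: (real^'k^'m) set) \<times> X1'"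
  have oT: "open T" unfolding T_def using X1'(1) by (auto intro: open_Times)
  have smy1T: "smooth_on T (\<lambda>q. y1 (snd q))"
    by (rule smooth_on_compose[OF smooth_on_snd[OF oT] smooth_on_subset[OF y1sm X1'(1,3)]]) (auto simp: T_def)
  have smh: "smooth_on T h" unfolding h_def
    by (rule smooth_on_add[OF smooth_on_scaleR_const[OF smooth_on_fst[OF oT]] smooth_on_scaleR_const[OF smy1T]])
  define W0 where "W0 = h -` X2' \<inter> T"
  have oW0: "open W0" unfolding W0_def
    using continuous_on_open_vimage[OF oT] smooth_on_continuous_on[OF smh] X2'(1) by blast
  have hp: "h (Us, Vs) = Us" unfolding h_def using y1Vs by (simp add: algebra_simps)
  have pW0: "(Us, Vs) \<in> W0" unfolding W0_def T_def using hp X1'(2) X2'(2) by simp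
  define G where "G q = (h q, (1 - \<omega>) *\<^sub>R snd q + \<omega> *\<^sub>R y2 (h q))" for q
  have smhW: "smooth_on W0 h" by (rule smooth_on_subset[OF smh oW0]) (auto simp: W0_def)
  have smy2h: "smooth_on W0 (\<lambda>q. y2 (h q))"
    by (rule smooth_on_compose[OF smhW smooth_on_subset[OF y2sm X2'(1,3)]]) (auto simp: W0_def)
  have smG: "smooth_on W0 G" unfolding G_def
    by (rule smooth_on_Pair[OF smhW smooth_on_add[OF smooth_on_scaleR_const[OF smooth_on_snd[OF oW0]] smooth_on_scaleR_const[OF smy2h]]])
  have SG: "Somega f \<omega> q = G q" if "q \<in> W0" for q
  proof -
    have "snd q \<in> X1'" using that unfolding W0_def T_def by auto
    then have e1: "S1hat f (snd q) = y1 (snd q)" by (rule S1eq)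
    have "h q \<in> X2'" using that unfolding W0_def by auto
    then have e2: "S2hat f (h q) = y2 (h q)" by (rule S2eq)
    show ?thesis unfolding Somega_def Let_def G_def using e1 e2 unfolding h_def by simp
  qed
  have conj2: "\<exists>W. open W \<and> (Us, Vs) \<in> W \<and> smooth_on W (Somega f \<omega>)"
    using oW0 pW0 smooth_on_cong[OF smG SG] by blast
  define hd where "hd x = (1 - \<omega>) *\<^sub>R fst x + \<omega> *\<^sub>R y1d (snd x)" for x :: "(real^'k^'m) \<times> (real^'k^'n)"
  define Sd where "Sd x = (hd x, (1 - \<omega>) *\<^sub>R snd x + \<omega> *\<^sub>R y2d (hd x))" for x
  have y1d': "(y1 has_derivative y1d) (at (snd (Us, Vs)))" using y1d by simp
  have hD: "(h has_derivative hd) (at (Us, Vs))"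
  proof -
    have "((\<lambda>q. y1 (snd q)) has_derivative (\<lambda>x. y1d (snd x))) (at (Us, Vs))"
      using has_derivative_compose[OF has_derivative_snd[OF has_derivative_ident] y1d'] by (simp add: o_def)
    then show ?thesis unfolding h_def hd_def
      by (intro has_derivative_add has_derivative_scaleR_right has_derivative_fst has_derivative_ident)
  qed
  have y2d': "(y2 has_derivative y2d) (at (h (Us, Vs)))" using y2d hp by simp
  have GD: "(G has_derivative Sd) (at (Us, Vs))"
  proof -
    have "((\<lambda>q. y2 (h q)) has_derivative (\<lambda>x. y2d (hd x))) (at (Us, Vs))"
      using has_derivative_compose[OF hD y2d'] by (simp add: o_def)
    then show ?thesis unfolding G_def Sd_def
      by (intro has_derivative_Pair hD has_derivative_add has_derivative_scaleR_right has_derivative_snd has_derivative_ident)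
  qed
  have SD: "(Somega f \<omega> has_derivative Sd) (at (Us, Vs))"
    by (rule has_derivative_transform_within_open[OF GD oW0 pW0]) (simp add: SG)
  have Nform: "N (a, b) = ((1 / \<omega>) *\<^sub>R A1 a, (1 / \<omega>) *\<^sub>R A2 b + B1 a)" for a b
    unfolding N_def E_def blockE_def B1_def by (simp add: Dform)
  have injN: "inj N"
  proof (rule injI)
    fix x y assume Nxy: "N x = N y"
    have "(1 / \<omega>) *\<^sub>R A1 (fst x) = (1 / \<omega>) *\<^sub>R A1 (fst y)"
      using Nxy Nform[of "fst x" "snd x"] Nform[of "fst y" "snd y"] by simp
    then have "A1 (fst x) = A1 (fst y)" using omega by simp
    then have f: "fst x = fst y" using injA1 by (simp add: inj_eq)
    have "(1 / \<omega>) *\<^sub>R A2 (snd x) + B1 (fst x) = (1 / \<omega>) *\<^sub>R A2 (snd y) + B1 (fst y)"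
      using Nxy Nform[of "fst x" "snd x"] Nform[of "fst y" "snd y"] by simp
    then have "A2 (snd x) = A2 (snd y)" using omega f by simp
    then have "snd x = snd y" using injA2 by (simp add: inj_eq)
    with f show "x = y" by (simp add: prod_eq_iff)
  qed
  have Sdeq: "Sd x = x - inv N (H x)" for x
  proof -
    obtain u v where x: "x = (u, v)" by fastforce
    define du where "du = (1 - \<omega>) *\<^sub>R u + \<omega> *\<^sub>R y1d v"
    have hdx: "hd (u, v) = du" unfolding hd_def du_def by simp
    have xs: "x - Sd x = (u - du, v - ((1 - \<omega>) *\<^sub>R v + \<omega> *\<^sub>R y2d du))"
      unfolding Sd_def x hdx by simp
    have c1: "A1 (u - du) = \<omega> *\<^sub>R (A1 u + C1 v)"
      unfolding du_def by (simp add: linear_diff[OF linA1] linear_add[OF linA1] linear_scale[OF linA1] A1y1d algebra_simps)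
    have c2: "A2 (v - ((1 - \<omega>) *\<^sub>R v + \<omega> *\<^sub>R y2d du)) = \<omega> *\<^sub>R (A2 v + B1 du)"
      by (simp add: linear_diff[OF linA2] linear_add[OF linA2] linear_scale[OF linA2] A2y2d algebra_simps)
    have c3: "B1 (u - du) = B1 u - B1 du" by (simp add: linear_diff[OF linB1])
    have "N (x - Sd x) = (A1 u + C1 v, B1 u + A2 v)"
      unfolding xs Nform c1 c2 c3 using omega by (simp add: algebra_simps)
    also have "\<dots> = H x" unfolding x Hsplit ..
    finally have "inv N (H x) = x - Sd x" by (rule inv_f_eq[OF injN])
    then show ?thesis by simp
  qed
  have conj3: "(Somega f \<omega> has_derivative (\<lambda>x. x - inv N (H x))) (at (Us, Vs))"
    using SD Sdeq by (simp add: fun_eq_iff[symmetric] Sdeq[abs_def])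
  have fdS: "frechet_derivative (Somega f \<omega>) (at (Us, Vs)) = Sd"
    using frechet_derivative_at[OF SD] by simp
  define M where "M = (\<lambda>y. y - \<omega> *\<^sub>R L y)"
  have Mform: "M (d1, d2) = (d1, d2 - \<omega> *\<^sub>R y2d d1)" for d1 d2 unfolding M_def Lform by simp
  have injM: "inj M"
  proof (rule injI)
    fix x y assume Mxy: "M x = M y"
    have mx: "M x = (fst x, snd x - \<omega> *\<^sub>R y2d (fst x))" using Mform[of "fst x" "snd x"] by simp
    have my: "M y = (fst y, snd y - \<omega> *\<^sub>R y2d (fst y))" using Mform[of "fst y" "snd y"] by simp
    have "(fst x, snd x - \<omega> *\<^sub>R y2d (fst x)) = (fst y, snd y - \<omega> *\<^sub>R y2d (fst y))"
      using Mxy mx my by metis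
    then have f: "fst x = fst y" and s: "snd x - \<omega> *\<^sub>R y2d (fst x) = snd y - \<omega> *\<^sub>R y2d (fst y)"
      by (metis prod.inject)+
    from s f have "snd x = snd y" by (metis diff_add_cancel)
    with f show "x = y" by (simp add: prod_eq_iff)
  qed
  have conj4: "\<forall>x. frechet_derivative (Somega f \<omega>) (at (Us, Vs)) x
            = inv (\<lambda>y. y - \<omega> *\<^sub>R L y) ((1 - \<omega>) *\<^sub>R x + \<omega> *\<^sub>R R x)"
  proof
    fix x :: "(real^'k^'m) \<times> (real^'k^'n)"
    obtain u v where x: "x = (u, v)" by fastforce
    have "M (Sd x) = (1 - \<omega>) *\<^sub>R x + \<omega> *\<^sub>R R x"
      unfolding Sd_def Mform x Rform hd_def by simp
    then have "inv M ((1 - \<omega>) *\<^sub>R x + \<omega> *\<^sub>R R x) = Sd x" by (rule inv_f_eq[OF injM])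
    then show "frechet_derivative (Somega f \<omega>) (at (Us, Vs)) x = inv (\<lambda>y. y - \<omega> *\<^sub>R L y) ((1 - \<omega>) *\<^sub>R x + \<omega> *\<^sub>R R x)"
      unfolding fdS M_def by simp
  qed
  have conj5: "(S2hat f) differentiable (at Us)" using S2d by (auto simp: differentiable_def)
  have conj6: "(S1hat f) differentiable (at Vs)" using S1d by (auto simp: differentiable_def)
  have conj7: "\<forall>u v. L (u, v) = (0, frechet_derivative (S2hat f) (at Us) u)" by (simp add: fd2 Lform)
  have conj8: "\<forall>u v. R (u, v) = (frechet_derivative (S1hat f) (at Vs) v, 0)" by (simp add: fd1 Rform)
  show ?thesis using conj1 conj2 conj3 conj4 conj5 conj6 conj7 conj8 by blast
qed


end
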